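(* Let $(V,\mathcal S)$ be a quantum vertex algebra and set $R(x)=\mathcal S(x)\sigma:V\otimes V\to V\otimes V\otimes\mathbb C((x))$, where $\sigma$ is the flip map on $V\otimes V$. Then $R(x)$ is an invertible twisting operator for the ordered pair $(V,V)$.
   Context: All vector spaces are over $\mathbb{C}$. A nonlocal vertex algebra is a vector space $V$ with a linear map $Y(\cdot,x):V\to \mathrm{Hom}(V,V((x)))$, $v\mapsto Y(v,x)=\sum_{n\in\mathbb Z}v_nx^{-n-1}$, and a vector $\mathbf 1\in V$ such that for all $v$: $Y(\mathbf 1,x)v=v$, $Y(v,x)\mathbf 1\in V[[x]]$, $\lim_{x\to0}Y(v,x)\mathbf 1=v$; and for all $u,v,w$ there is $k\ge0$ with $(x_0+x_2)^kY(u,x_0+x_2)Y(v,x_2)w=(x_0+x_2)^kY(Y(u,x_0)v,x_2)w$. Write $Y(x)(u\otimes v)=Y(u,x)v$, $\mathcal Dv=v_{-2}\mathbf 1$. Conventions: $f(x_1\pm x_2)$ for $f\in\mathbb C((x))$ (and $(x_1\pm x_2)^n$) is expanded in nonnegative powers of the second variable; $T^{ij}$ denotes $T$ acting on tensor factors $i,j$; maps are extended linearly over scalar series. A weak quantum vertex algebra is a nonlocal vertex algebra $V$ such that for all $u,v\in V$ there exist finitely many $u^{(i)},v^{(i)}\in V$, $f_i\in\mathbb C((x))$ and $k\ge0$ with $(x_1-x_2)^kY(u,x_1)Y(v,x_2)=(x_1-x_2)^k\sum_i f_i(x_2-x_1)Y(v^{(i)},x_2)Y(u^{(i)},x_1)$.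 A rational quantum Yang–Baxter operator on $V$ is a linear map $\mathcal S(x):V\otimes V\to V\otimes V\otimes\mathbb C((x))$ with $\mathcal S^{12}(x)\mathcal S^{13}(x+z)\mathcal S^{23}(z)=\mathcal S^{23}(z)\mathcal S^{13}(x+z)\mathcal S^{12}(x)$; it is unitary if $\mathcal S(x)\sigma\mathcal S(-x)\sigma=1$. A quantum vertex algebra is a pair $(V,\mathcal S)$ where $V$ is a weak quantum vertex algebra and $\mathcal S(x)$ is a unitary rational quantum Yang–Baxter operator on $V$ such that $\mathcal S(x)(\mathbf 1\otimes v)=\mathbf 1\otimes v$, $[\mathcal D\otimes1,\mathcal S(x)]=-\frac{d}{dx}\mathcal S(x)$, $Y(u,x)v=e^{x\mathcal D}\sum_i f_i(-x)Y(v_i,-x)u_i$ where $\mathcal S(x)(v\otimes u)=\sum_i v_i\otimes u_i\otimes f_i(x)$, and $\mathcal S(x_1)(Y(x_2)\otimes1)=(Y(x_2)\otimes1)\mathcal S^{23}(x_1)\mathcal S^{13}(x_1+x_2)$. Twisting operator for $(U,V)$: a linear map $R(x):V\otimes U\to U\otimes V\otimes\mathbb C((x))$ such that $R(x)(v\otimes\mathbf 1)=\mathbf 1\otimes v$, $R(x)(\mathbf 1\otimes u)=u\otimes\mathbf 1$, $R(x_1)(1\otimes Y(x_2))=(Y(x_2)\otimes1)R^{23}(x_1)R^{12}(x_1+x_2)$ on $V\otimes U\otimes U$, and $R(x_1)(Y(x_2)\otimes 1)=(1\otimes Y(x_2))R^{12}(x_1-x_2)R^{23}(x_1)$ on $V\otimes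 V\otimes U$; it is invertible if its $\mathbb C((x))$-linear extension is invertible. *)

theory Defs
  imports "HOL-Library.Poly_Mapping" "HOL-Library.Groups_Big_Fun"
    "HOL-Computational_Algebra.Formal_Laurent_Series"
begin

text \<open>A complex vector space with basis indexed by
 the type 'i is modelled as the space of finitely supported functions 'i =>0 complex.
 Tensor products of such spaces are the free spaces on product index types.
 A (vector valued) formal series in two variables (y1,y2) is modelled by its array of
 coefficients: F a b is the coefficient of y1^a y2^b.  One-variable series are two-variable
 series in the first variable only.  Linear maps out of a free space are given by their
 values on basis vectors.\<close>

type_synonym 'i vec = "'i \<Rightarrow>\<^sub>0 complex"
type_synonym 'i ser2 = "int \<Rightarrow> int \<Rightarrow> 'i vec"
type_synonym cser2 = "int \<Rightarrow> int \<Rightarrow> complex"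

definition smul :: "complex \<Rightarrow> 'i vec \<Rightarrow> 'i vec" where
  "smul c v = Poly_Mapping.map (\<lambda>a. c * a) v"

definition bv :: "'i \<Rightarrow> 'i vec" where
  "bv i = Poly_Mapping.single i 1"

definition tens :: "'i vec \<Rightarrow> 'j vec \<Rightarrow> ('i \<times> 'j) vec" where
  "tens u v = Sum_any (\<lambda>(i, j). smul (Poly_Mapping.lookup u i * Poly_Mapping.lookup v j) (bv (i, j)))"

definition const2 :: "'i vec \<Rightarrow> 'i ser2" where
  "const2 t = (\<lambda>a b. if a = 0 \<and> b = 0 then t else 0)"

definition sm :: "cser2 \<Rightarrow> 'i ser2 \<Rightarrow> 'i ser2" where
  "sm P G = (\<lambda>a b. Sum_any (\<lambda>(c, d). smul (P c d) (G (a - c) (b - d))))"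

definition app :: "('i \<Rightarrow> 'j ser2) \<Rightarrow> 'i ser2 \<Rightarrow> 'j ser2" where
  "app E F = (\<lambda>a b. Sum_any (\<lambda>(i, c, d). smul (Poly_Mapping.lookup (F (a - c) (b - d)) i) (E i c d)))"

definition sub_x :: "complex fls \<Rightarrow> cser2" where
  "sub_x f = (\<lambda>c d. if d = 0 then fls_nth f c else 0)"

definition sub_z :: "complex fls \<Rightarrow> cser2" where
  "sub_z f = (\<lambda>c d. if c = 0 then fls_nth f d else 0)"

text \<open>f(y1 + s*y2), expanded in nonnegative powers of y2\<close>
definition sub_plus :: "complex \<Rightarrow> complex fls \<Rightarrow> cser2" where
  "sub_plus s f = (\<lambda>c d. if d \<ge> 0
       then s ^ nat d * ((of_int (c + d) :: complex) gchoose nat d) * fls_nth f (c + d) else 0)"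

definition sub_negx :: "complex fls \<Rightarrow> cser2" where
  "sub_negx f = (\<lambda>c d. if d = 0 then (-1) ^ nat \<bar>c\<bar> * fls_nth f c else 0)"

definition sub_dx :: "complex fls \<Rightarrow> cser2" where
  "sub_dx f = sub_x (fls_deriv f)"

text \<open>A linear map M : W1 -> W2 (x) C((x)) given on basis vectors, with a substitution of x\<close>
definition sop :: "('x \<Rightarrow> ('y \<Rightarrow>\<^sub>0 complex fls)) \<Rightarrow> (complex fls \<Rightarrow> cser2) \<Rightarrow> 'x \<Rightarrow> 'y ser2" where
  "sop M \<sigma> i = (\<lambda>c d. Sum_any (\<lambda>p. smul (\<sigma> (Poly_Mapping.lookup (M i) p) c d) (bv p)))"

definition leg12 :: "('x \<times> 'y \<Rightarrow> ('p \<times> 'q \<Rightarrow>\<^sub>0 complex fls)) \<Rightarrow> (complex fls \<Rightarrow> cser2)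
    \<Rightarrow> 'x \<times> 'y \<times> 'z \<Rightarrow> ('p \<times> 'q \<times> 'z) ser2" where
  "leg12 M \<sigma> = (\<lambda>(a, b, c) cc dd.
     Sum_any (\<lambda>(m, n). smul (\<sigma> (Poly_Mapping.lookup (M (a, b)) (m, n)) cc dd) (bv (m, n, c))))"

definition leg23 :: "('y \<times> 'z \<Rightarrow> ('q \<times> 'r \<Rightarrow>\<^sub>0 complex fls)) \<Rightarrow> (complex fls \<Rightarrow> cser2)
    \<Rightarrow> 'x \<times> 'y \<times> 'z \<Rightarrow> ('x \<times> 'q \<times> 'r) ser2" where
  "leg23 M \<sigma> = (\<lambda>(a, b, c) cc dd.
     Sum_any (\<lambda>(n, t). smul (\<sigma> (Poly_Mapping.lookup (M (b, c)) (n, t)) cc dd) (bv (a, n, t))))"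

definition leg13 :: "('x \<times> 'z \<Rightarrow> ('p \<times> 'r \<Rightarrow>\<^sub>0 complex fls)) \<Rightarrow> (complex fls \<Rightarrow> cser2)
    \<Rightarrow> 'x \<times> 'y \<times> 'z \<Rightarrow> ('p \<times> 'y \<times> 'r) ser2" where
  "leg13 M \<sigma> = (\<lambda>(a, b, c) cc dd.
     Sum_any (\<lambda>(m, t). smul (\<sigma> (Poly_Mapping.lookup (M (a, c)) (m, t)) cc dd) (bv (m, b, t))))"

definition flip :: "'x \<times> 'y \<Rightarrow> ('y \<times> 'x) ser2" where
  "flip = (\<lambda>(i, j). const2 (bv (j, i)))"

text \<open>Vertex operators: Y u v n is u_n v, i.e. Y(u,x)v = sum_n (Y u v n) x^(-n-1).\<close>
type_synonym 'b vop = "'b vec \<Rightarrow> 'b vec \<Rightarrow> int \<Rightarrow> 'b vec"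

definition Yx :: "'b vop \<Rightarrow> 'b \<times> 'b \<Rightarrow> 'b ser2" where
  "Yx Y = (\<lambda>(i, j) c d. if d = 0 then Y (bv i) (bv j) (- c - 1) else 0)"

definition Y12 :: "'a vop \<Rightarrow> 'a \<times> 'a \<times> 'z \<Rightarrow> ('a \<times> 'z) ser2" where
  "Y12 Y = (\<lambda>(a, b, c) cc dd. if cc = 0 then tens (Y (bv a) (bv b) (- dd - 1)) (bv c) else 0)"

definition Y23 :: "'a vop \<Rightarrow> 'x \<times> 'a \<times> 'a \<Rightarrow> ('x \<times> 'a) ser2" where
  "Y23 Y = (\<lambda>(a, b, c) cc dd. if cc = 0 then tens (bv a) (Y (bv b) (bv c) (- dd - 1)) else 0)"

definition Dop :: "'b vop \<Rightarrow> 'b vec \<Rightarrow> 'b vec \<Rightarrow> 'b vec" where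
  "Dop Y vac v = Y v vac (-2)"

definition D1 :: "('b vec \<Rightarrow> 'b vec) \<Rightarrow> 'b \<times> 'b \<Rightarrow> ('b \<times> 'b) ser2" where
  "D1 D = (\<lambda>(i, j). const2 (tens (D (bv i)) (bv j)))"

definition negvar :: "'i ser2 \<Rightarrow> 'i ser2" where
  "negvar G = (\<lambda>a b. smul ((-1) ^ nat \<bar>a\<bar>) (G a b))"

definition expD :: "('b vec \<Rightarrow> 'b vec) \<Rightarrow> 'b ser2 \<Rightarrow> 'b ser2" where
  "expD D G = (\<lambda>a b. Sum_any (\<lambda>k::nat. smul (1 / of_nat (fact k)) ((D ^^ k) (G (a - int k) b))))"

text \<open>Y(u, y1 + y2) applied to a vector series G in (y1,y2), (y1+y2)^m expanded in
 nonnegative powers of y2\<close>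
definition Yplus :: "'b vop \<Rightarrow> 'b vec \<Rightarrow> 'b ser2 \<Rightarrow> 'b ser2" where
  "Yplus Y u G = (\<lambda>a b. Sum_any (\<lambda>(n, c, d).
      smul (sub_plus 1 (fls_X_intpow (- n - 1)) c d) (Y u (G (a - c) (b - d)) n)))"

definition nonlocal_va :: "'b vop \<Rightarrow> 'b vec \<Rightarrow> bool" where
  "nonlocal_va Y vac \<longleftrightarrow>
    (\<forall>u u' v n. Y (u + u') v n = Y u v n + Y u' v n) \<and>
    (\<forall>c u v n. Y (smul c u) v n = smul c (Y u v n)) \<and>
    (\<forall>u v v' n. Y u (v + v') n = Y u v n + Y u v' n) \<and>
    (\<forall>c u v n. Y u (smul c v) n = smul c (Y u v n)) \<and>
    (\<forall>u v. \<exists>N. \<forall>n\<ge>N. Y u v n = 0) \<and>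
    (\<forall>v n. Y vac v n = (if n = -1 then v else 0)) \<and>
    (\<forall>v n. n \<ge> 0 \<longrightarrow> Y v vac n = 0) \<and>
    (\<forall>v. Y v vac (-1) = v) \<and>
    (\<forall>u v w. \<exists>k::nat.
       sm (sub_plus 1 (fls_X ^ k))
          (Yplus Y u (\<lambda>a b. if a = 0 then Y v w (- b - 1) else 0)) =
       sm (sub_plus 1 (fls_X ^ k)) (\<lambda>a b. Y (Y u v (- a - 1)) w (- b - 1)))"

definition weak_qva :: "'b vop \<Rightarrow> 'b vec \<Rightarrow> bool" where
  "weak_qva Y vac \<longleftrightarrow> nonlocal_va Y vac \<and>
    (\<forall>u v. \<exists>(L :: ('b vec \<times> 'b vec \<times> complex fls) list) (k::nat). \<forall>w.
       sm (sub_plus (-1) (fls_X ^ k)) (\<lambda>a b. Y u (Y v w (- b - 1)) (- a - 1)) =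
       sm (sub_plus (-1) (fls_X ^ k))
         (\<lambda>a b. sum_list (map (\<lambda>(ui, vi, f).
             sm (\<lambda>c d. sub_plus (-1) f d c) (\<lambda>c d. Y vi (Y ui w (- c - 1)) (- d - 1)) a b) L)))"

type_synonym 'b qop = "'b \<times> 'b \<Rightarrow> ('b \<times> 'b \<Rightarrow>\<^sub>0 complex fls)"

definition rational_qybo :: "'b qop \<Rightarrow> bool" where
  "rational_qybo S \<longleftrightarrow> (\<forall>t :: ('b \<times> 'b \<times> 'b) vec.
     app (leg12 S sub_x) (app (leg13 S (sub_plus 1)) (app (leg23 S sub_z) (const2 t))) =
     app (leg23 S sub_z) (app (leg13 S (sub_plus 1)) (app (leg12 S sub_x) (const2 t))))"

definition unitary :: "'b qop \<Rightarrow> bool" where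
  "unitary S \<longleftrightarrow> (\<forall>t :: ('b \<times> 'b) vec.
     app (sop S sub_x) (app flip (app (sop S sub_negx) (app flip (const2 t)))) = const2 t)"

definition qva :: "'b vop \<Rightarrow> 'b vec \<Rightarrow> 'b qop \<Rightarrow> bool" where
  "qva Y vac S \<longleftrightarrow> weak_qva Y vac \<and> rational_qybo S \<and> unitary S \<and>
    (\<forall>v. app (sop S sub_x) (const2 (tens vac v)) = const2 (tens vac v)) \<and>
    (\<forall>t. (\<lambda>a b. app (D1 (Dop Y vac)) (app (sop S sub_x) (const2 t)) a b
               - app (sop S sub_x) (app (D1 (Dop Y vac)) (const2 t)) a b)
         = (\<lambda>a b. - app (sop S sub_dx) (const2 t) a b)) \<and>
    (\<forall>u v. (\<lambda>a b. if b = 0 then Y u v (- a - 1) else 0) =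
       expD (Dop Y vac) (negvar (app (Yx Y) (app (sop S sub_x) (const2 (tens v u)))))) \<and>
    (\<forall>t :: ('b \<times> 'b \<times> 'b) vec.
       app (sop S sub_x) (app (Y12 Y) (const2 t)) =
       app (Y12 Y) (app (leg23 S sub_x) (app (leg13 S (sub_plus 1)) (const2 t))))"

text \<open>R(x) : V (x) U -> U (x) V (x) C((x)), given on basis vectors; U has basis 'a, V has basis 'b\<close>
definition twisting_op :: "'a vop \<Rightarrow> 'a vec \<Rightarrow> 'b vop \<Rightarrow> 'b vec
     \<Rightarrow> ('b \<times> 'a \<Rightarrow> ('a \<times> 'b \<Rightarrow>\<^sub>0 complex fls)) \<Rightarrow> bool" where
  "twisting_op YU vacU YV vacV R \<longleftrightarrow>
    (\<forall>v. app (sop R sub_x) (const2 (tens v vacU)) = const2 (tens vacU v)) \<and>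
    (\<forall>u. app (sop R sub_x) (const2 (tens vacV u)) = const2 (tens u vacV)) \<and>
    (\<forall>t :: ('b \<times> 'a \<times> 'a) vec.
       app (sop R sub_x) (app (Y23 YU) (const2 t)) =
       app (Y12 YU) (app (leg23 R sub_x) (app (leg12 R (sub_plus 1)) (const2 t)))) \<and>
    (\<forall>t :: ('b \<times> 'b \<times> 'a) vec.
       app (sop R sub_x) (app (Y12 YV) (const2 t)) =
       app (Y23 YV) (app (leg12 R (sub_plus (-1))) (app (leg23 R sub_x) (const2 t))))"

text \<open>C((x))-linear extension of R to the free C((x))-module on basis pairs\<close>
definition ext_lin :: "('x \<Rightarrow> ('y \<Rightarrow>\<^sub>0 complex fls)) \<Rightarrow> ('x \<Rightarrow>\<^sub>0 complex fls) \<Rightarrow> ('y \<Rightarrow>\<^sub>0 complex fls)" where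
  "ext_lin R T = Sum_any (\<lambda>i. Poly_Mapping.map (\<lambda>f. Poly_Mapping.lookup T i * f) (R i))"

definition invertible_twisting where
  "invertible_twisting YU vacU YV vacV R \<longleftrightarrow> twisting_op YU vacU YV vacV R \<and> bij (ext_lin R)"

text \<open>R(x) = S(x) sigma\<close>
definition comp_flip :: "'b qop \<Rightarrow> 'b qop" where
  "comp_flip S = (\<lambda>(i, j). S (j, i))"

end

theory Submission
  imports Defs
begin


lemma lookup_smul[simp]: "Poly_Mapping.lookup (smul c v) k = c * Poly_Mapping.lookup v k"
  unfolding smul_def by (simp add: Poly_Mapping.map.rep_eq when_def)

lemma smul_0[simp]: "smul 0 v = 0" "smul c 0 = 0"
  by (auto intro!: poly_mapping_eqI)

lemma smul_eq0: "smul c v \<noteq> 0 \<Longrightarrow> c \<noteq> 0 \<and> v \<noteq> 0"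
  by auto

lemma lookup_bv: "Poly_Mapping.lookup (bv i) k = (if k = i then 1 else 0)"
  unfolding bv_def by (simp add: lookup_single when_def)

lemma SA_lookup:
  assumes "finite {x. f x \<noteq> 0}"
  shows "Poly_Mapping.lookup (Sum_any f) k = Sum_any (\<lambda>x. Poly_Mapping.lookup (f x) k)"
proof -
  have "Sum_any f = sum f {x. f x \<noteq> 0}" using assms Sum_any.expand_superset by blast
  moreover have "Sum_any (\<lambda>x. Poly_Mapping.lookup (f x) k) = sum (\<lambda>x. Poly_Mapping.lookup (f x) k) {x. f x \<noteq> 0}"
    by (rule Sum_any.expand_superset) (use assms in auto)
  ultimately show ?thesis by (simp add: lookup_sum)
qed

lemma SA_pair:
  assumes "finite {p. g (fst p) (snd p) \<noteq> (0::'c::comm_monoid_add)}"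
  shows "Sum_any (\<lambda>x. Sum_any (\<lambda>y. g x y)) = Sum_any (\<lambda>p. g (fst p) (snd p))"
proof -
  let ?S = "{p. g (fst p) (snd p) \<noteq> 0}"
  have sub: "{x. \<exists>y. g x y \<noteq> 0} \<times> {y. \<exists>x. g x y \<noteq> 0} \<subseteq> fst ` ?S \<times> snd ` ?S"
  proof
    fix p assume "p \<in> {x. \<exists>y. g x y \<noteq> 0} \<times> {y. \<exists>x. g x y \<noteq> 0}"
    then obtain y x where "g (fst p) y \<noteq> 0" "g x (snd p) \<noteq> 0" by auto
    then have h1: "(fst p, y) \<in> ?S" and h2: "(x, snd p) \<in> ?S" by auto
    have "fst p \<in> fst ` ?S" using imageI[OF h1, of fst] by simp
    moreover have "snd p \<in> snd ` ?S" using imageI[OF h2, of snd] by simp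
    ultimately show "p \<in> fst ` ?S \<times> snd ` ?S" by (simp add: mem_Times_iff)
  qed
  have "Sum_any (\<lambda>x. Sum_any (g x)) = Sum_any (\<lambda>(x, y). g x y)"
    by (rule Sum_any.cartesian_product[OF _ sub]) (use assms in auto)
  then show ?thesis by (simp add: case_prod_beta)
qed

lemma SA_nonzero: "Sum_any f \<noteq> 0 \<Longrightarrow> \<exists>x. f x \<noteq> 0"
  by (metis Sum_any.neutral ext)

lemma SA_mult_left: "Sum_any g * (r::'a::idom) = Sum_any (\<lambda>n. g n * r)"
proof (cases "r = 0")
  case False
  show ?thesis
  proof (cases "finite {a. g a \<noteq> 0}")
    case True then show ?thesis by (rule Sum_any_left_distrib)
  next
    case nf: False
    have "{a. g a * r \<noteq> 0} = {a. g a \<noteq> 0}" using False by auto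
    with nf show ?thesis by simp
  qed
qed simp

lemma SA_mult_right: "(r::'a::idom) * Sum_any g = Sum_any (\<lambda>n. r * g n)"
  using SA_mult_left[of g r] by (simp add: mult.commute)

definition fin_app :: "('i \<Rightarrow> 'j ser2) \<Rightarrow> 'i ser2 \<Rightarrow> bool" where
  "fin_app E F \<longleftrightarrow> (\<forall>a b. finite {(i, c, d). Poly_Mapping.lookup (F (a - c) (b - d)) i \<noteq> 0 \<and> E i c d \<noteq> 0})"

lemma app_lookup:
  assumes "fin_app E F"
  shows "Poly_Mapping.lookup (app E F a b) k =
     Sum_any (\<lambda>(i, c, d). Poly_Mapping.lookup (F (a - c) (b - d)) i * Poly_Mapping.lookup (E i c d) k)"
proof -
  have "finite {(i, c, d). Poly_Mapping.lookup (F (a - c) (b - d)) i \<noteq> 0 \<and> E i c d \<noteq> 0}"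
    using assms unfolding fin_app_def by blast
  then have "finite {x. (\<lambda>(i, c, d). smul (Poly_Mapping.lookup (F (a - c) (b - d)) i) (E i c d)) x \<noteq> 0}"
    by (rule rev_finite_subset) auto
  then show ?thesis unfolding app_def
    by (subst SA_lookup) (auto simp: case_prod_beta)
qed

lemma app_lookup_pt:
  assumes "finite {(i, c, d). Poly_Mapping.lookup (F (a - c) (b - d)) i \<noteq> 0 \<and> E i c d \<noteq> 0}"
  shows "Poly_Mapping.lookup (app E F a b) k =
     Sum_any (\<lambda>(i, c, d). Poly_Mapping.lookup (F (a - c) (b - d)) i * Poly_Mapping.lookup (E i c d) k)"
proof -
  have "finite {x. (\<lambda>(i, c, d). smul (Poly_Mapping.lookup (F (a - c) (b - d)) i) (E i c d)) x \<noteq> 0}"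
    using assms by (rule rev_finite_subset) auto
  then show ?thesis unfolding app_def
    by (subst SA_lookup) (auto simp: case_prod_beta)
qed

lemma app_nonzero:
  assumes "app E F a b \<noteq> 0"
  shows "\<exists>i c d. Poly_Mapping.lookup (F (a - c) (b - d)) i \<noteq> 0 \<and> E i c d \<noteq> 0"
proof -
  from assms obtain x where "(\<lambda>(i, c, d). smul (Poly_Mapping.lookup (F (a - c) (b - d)) i) (E i c d)) x \<noteq> 0"
    unfolding app_def using SA_nonzero by blast
  then show ?thesis by (cases x) (auto dest!: smul_eq0)
qed


definition comp :: "('j \<Rightarrow> 'k ser2) \<Rightarrow> ('i \<Rightarrow> 'j ser2) \<Rightarrow> 'i \<Rightarrow> 'k ser2" where
  "comp E E' = (\<lambda>j. app E (E' j))"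

definition fin6 :: "('j \<Rightarrow> 'k ser2) \<Rightarrow> ('i \<Rightarrow> 'j ser2) \<Rightarrow> 'i ser2 \<Rightarrow> bool" where
  "fin6 E E' F \<longleftrightarrow> (\<forall>a b. finite {(j, c', d', i, c, d).
     Poly_Mapping.lookup (F (a - c - c') (b - d - d')) j \<noteq> 0 \<and>
     Poly_Mapping.lookup (E' j c' d') i \<noteq> 0 \<and> E i c d \<noteq> 0})"

lemma app_assoc:
  fixes E :: "'j \<Rightarrow> 'k ser2" and E' :: "'i \<Rightarrow> 'j ser2" and F :: "'i ser2"
  assumes f1: "fin_app E' F" and f6: "fin6 E E' F"
  shows "app E (app E' F) = app (comp E E') F"
proof (intro ext poly_mapping_eqI)
  fix a b k
  let ?T = "{(j, c', d', i, c, d).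
     Poly_Mapping.lookup (F (a - c - c') (b - d - d')) j \<noteq> 0 \<and>
     Poly_Mapping.lookup (E' j c' d') i \<noteq> 0 \<and> E i c d \<noteq> 0}"
  have finT: "finite ?T" using f6 unfolding fin6_def by blast
  have fa: "fin_app E (app E' F)"
    unfolding fin_app_def
  proof (intro allI)
    fix a b
    let ?T = "{(j, c', d', i, c, d).
       Poly_Mapping.lookup (F (a - c - c') (b - d - d')) j \<noteq> 0 \<and>
       Poly_Mapping.lookup (E' j c' d') i \<noteq> 0 \<and> E i c d \<noteq> 0}"
    have "finite ?T" using f6 unfolding fin6_def by blast
    then have "finite ((\<lambda>(j, c', d', i, c, d). (i, c, d)) ` ?T)" by simp
    then show "finite {(i, c, d). Poly_Mapping.lookup (app E' F (a - c) (b - d)) i \<noteq> 0 \<and> E i c d \<noteq> 0}"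
    proof (rule rev_finite_subset, safe)
      fix i c d
      assume h: "Poly_Mapping.lookup (app E' F (a - c) (b - d)) i \<noteq> 0" "E i c d \<noteq> 0"
      from h(1) obtain x where "(\<lambda>(j, c', d'). Poly_Mapping.lookup (F (a - c - c') (b - d - d')) j * Poly_Mapping.lookup (E' j c' d') i) x \<noteq> 0"
        unfolding app_lookup[OF f1] using SA_nonzero by blast
      then obtain j c' d' where "Poly_Mapping.lookup (F (a - c - c') (b - d - d')) j \<noteq> 0"
          "Poly_Mapping.lookup (E' j c' d') i \<noteq> 0" by (cases x) auto
      with h(2) show "(i, c, d) \<in> (\<lambda>(j, c', d', i, c, d). (i, c, d)) ` ?T"
        by (intro image_eqI[where x="(j, c', d', i, c, d)"]) auto
    qed
  qed
  have fb: "fin_app (comp E E') F"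
    unfolding fin_app_def
  proof (intro allI)
    fix a b
    let ?T = "{(j, c', d', i, c, d).
       Poly_Mapping.lookup (F (a - c - c') (b - d - d')) j \<noteq> 0 \<and>
       Poly_Mapping.lookup (E' j c' d') i \<noteq> 0 \<and> E i c d \<noteq> 0}"
    have "finite ?T" using f6 unfolding fin6_def by blast
    then have "finite ((\<lambda>(j, c', d', i, c, d). (j, c + c', d + d')) ` ?T)" by simp
    then show "finite {(j, c1, d1). Poly_Mapping.lookup (F (a - c1) (b - d1)) j \<noteq> 0 \<and> comp E E' j c1 d1 \<noteq> 0}"
    proof (rule rev_finite_subset, safe)
      fix j c1 d1
      assume h: "Poly_Mapping.lookup (F (a - c1) (b - d1)) j \<noteq> 0" "comp E E' j c1 d1 \<noteq> 0"
      from h(2) obtain i c d where "Poly_Mapping.lookup (E' j (c1 - c) (d1 - d)) i \<noteq> 0" "E i c d \<noteq> 0"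
        unfolding comp_def using app_nonzero by blast
      with h(1) show "(j, c1, d1) \<in> (\<lambda>(j, c', d', i, c, d). (j, c + c', d + d')) ` ?T"
        by (intro image_eqI[where x="(j, c1 - c, d1 - d, i, c, d)"]) auto
    qed
  qed
  define W where "W = (\<lambda>(j, c', d', i, c, d).
     Poly_Mapping.lookup (F (a - c - c') (b - d - d')) j * Poly_Mapping.lookup (E' j c' d') i *
     Poly_Mapping.lookup (E i c d) k)"
  have Wsupp: "{q. W q \<noteq> 0} \<subseteq> ?T" unfolding W_def by auto
  have L1: "Poly_Mapping.lookup (app E (app E' F) a b) k =
     Sum_any (\<lambda>(i, c, d). Sum_any (\<lambda>(j, c', d'). W (j, c', d', i, c, d)))"
    unfolding app_lookup[OF fa] app_lookup[OF f1] W_def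
    by (simp add: SA_mult_left mult.assoc case_prod_beta)
  have L2: "Sum_any (\<lambda>(i, c, d). Sum_any (\<lambda>(j, c', d'). W (j, c', d', i, c, d))) =
      Sum_any (\<lambda>p. W (fst (snd p), fst (snd (snd p)), snd (snd (snd p)), fst (fst p), fst (snd (fst p)), snd (snd (fst p))))"
  proof -
    have "Sum_any (\<lambda>(i, c, d). Sum_any (\<lambda>(j, c', d'). W (j, c', d', i, c, d))) =
      Sum_any (\<lambda>x. Sum_any (\<lambda>y. W (fst y, fst (snd y), snd (snd y), fst x, fst (snd x), snd (snd x))))"
      by (simp add: case_prod_beta)
    also have "\<dots> = Sum_any (\<lambda>p. W (fst (snd p), fst (snd (snd p)), snd (snd (snd p)), fst (fst p), fst (snd (fst p)), snd (snd (fst p))))"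
    proof (rule SA_pair)
      have "finite ((\<lambda>(j, c', d', i, c, d). ((i, c, d), (j, c', d'))) ` ?T)" using finT by simp
      then show "finite {p. W (fst (snd p), fst (snd (snd p)), snd (snd (snd p)), fst (fst p), fst (snd (fst p)), snd (snd (fst p))) \<noteq> 0}"
      proof (rule rev_finite_subset, safe)
        fix i c d j c' d'
        assume "W (fst (snd ((i, c, d), j, c', d')), fst (snd (snd ((i, c, d), j, c', d'))), snd (snd (snd ((i, c, d), j, c', d'))),
           fst (fst ((i, c, d), j, c', d')), fst (snd (fst ((i, c, d), j, c', d'))), snd (snd (fst ((i, c, d), j, c', d')))) \<noteq> 0"
        then have "(j, c', d', i, c, d) \<in> ?T" using Wsupp by auto
        then show "((i, c, d), j, c', d') \<in> (\<lambda>(j, c', d', i, c, d). ((i, c, d), j, c', d')) ` ?T"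
          by (rule image_eqI[rotated]) simp
      qed
    qed
    finally show ?thesis .
  qed
  have L3: "Sum_any (\<lambda>p. W (fst (snd p), fst (snd (snd p)), snd (snd (snd p)), fst (fst p), fst (snd (fst p)), snd (snd (fst p)))) = Sum_any W"
  proof (rule Sum_any.reindex_cong[symmetric])
    let ?l = "\<lambda>p::('j\<times>int\<times>int)\<times>('i\<times>int\<times>int). (fst (snd p), fst (snd (snd p)), snd (snd (snd p)), fst (fst p), fst (snd (fst p)), snd (snd (fst p)))"
    let ?m = "\<lambda>(j, c', d', i, c, d). ((i, c, d), j, c', d')"
    show "bij ?l" by (rule o_bij[where g = ?m]) (auto simp: fun_eq_iff)
    show "W \<circ> ?l = (\<lambda>p. W (fst (snd p), fst (snd (snd p)), snd (snd (snd p)), fst (fst p), fst (snd (fst p)), snd (snd (fst p))))"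
      by (simp add: o_def)
  qed
  let ?V = "\<lambda>p. W (fst (fst p), fst (snd (fst p)) - fst (snd (snd p)), snd (snd (fst p)) - snd (snd (snd p)), fst (snd p), fst (snd (snd p)), snd (snd (snd p)))"
  have R0: "Poly_Mapping.lookup (F (a - c1) (b - d1)) j * Poly_Mapping.lookup (comp E E' j c1 d1) k =
       Sum_any (\<lambda>x. W (j, c1 - fst (snd x), d1 - snd (snd x), fst x, fst (snd x), snd (snd x)))" for j c1 d1
  proof -
    show "Poly_Mapping.lookup (F (a - c1) (b - d1)) j * Poly_Mapping.lookup (comp E E' j c1 d1) k =
       Sum_any (\<lambda>x. W (j, c1 - fst (snd x), d1 - snd (snd x), fst x, fst (snd x), snd (snd x)))"
    proof (cases "Poly_Mapping.lookup (F (a - c1) (b - d1)) j = 0")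
      case True
      then show ?thesis by (simp add: W_def case_prod_beta)
    next
      case False
      have fin: "finite {(i, c, d). Poly_Mapping.lookup (E' j (c1 - c) (d1 - d)) i \<noteq> 0 \<and> E i c d \<noteq> 0}"
      proof -
        have "finite ((\<lambda>(j, c', d', i, c, d). (i, c, d)) ` ?T)" using finT by simp
        then show ?thesis
        proof (rule rev_finite_subset, safe)
          fix i c d assume "Poly_Mapping.lookup (E' j (c1 - c) (d1 - d)) i \<noteq> 0" "E i c d \<noteq> 0"
          with False show "(i, c, d) \<in> (\<lambda>(j, c', d', i, c, d). (i, c, d)) ` ?T"
            by (intro image_eqI[where x="(j, c1 - c, d1 - d, i, c, d)"]) auto
        qed
      qed
      show ?thesis unfolding comp_def app_lookup_pt[OF fin] SA_mult_right
        by (rule Sum_any.cong) (auto simp: W_def mult.assoc)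
    qed
  qed
  have R1: "Poly_Mapping.lookup (app (comp E E') F a b) k =
     Sum_any (\<lambda>y. Sum_any (\<lambda>x. ?V (y, x)))"
    unfolding app_lookup[OF fb] by (simp add: R0 case_prod_beta)
  have finV: "finite {p. ?V p \<noteq> 0}"
  proof -
    have "finite ((\<lambda>(j, c', d', i, c, d). ((j, c' + c, d' + d), (i, c, d))) ` ?T)" using finT by simp
    then show ?thesis
    proof (rule rev_finite_subset, safe)
      fix j c1 d1 i c d
      assume "?V ((j, c1, d1), (i, c, d)) \<noteq> 0"
      then have "(j, c1 - c, d1 - d, i, c, d) \<in> ?T" using Wsupp by auto
      then show "((j, c1, d1), (i, c, d)) \<in> (\<lambda>(j, c', d', i, c, d). ((j, c' + c, d' + d), (i, c, d))) ` ?T"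
        by (rule image_eqI[rotated]) simp
    qed
  qed
  have R2: "Sum_any (\<lambda>y. Sum_any (\<lambda>x. ?V (y, x))) = Sum_any ?V"
  proof -
    have "Sum_any (\<lambda>y. Sum_any (\<lambda>x. (\<lambda>y x. ?V (y, x)) y x)) = Sum_any (\<lambda>p. (\<lambda>y x. ?V (y, x)) (fst p) (snd p))"
      by (rule SA_pair) (use finV in simp)
    then show ?thesis by simp
  qed
  have R3: "Sum_any ?V = Sum_any W"
  proof (rule Sum_any.reindex_cong[symmetric])
    let ?l = "\<lambda>p::('i\<times>int\<times>int)\<times>('j\<times>int\<times>int). (fst (fst p), fst (snd (fst p)) - fst (snd (snd p)), snd (snd (fst p)) - snd (snd (snd p)), fst (snd p), fst (snd (snd p)), snd (snd (snd p)))"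
    let ?m = "\<lambda>(j, c', d', i, c, d). ((j, c' + c, d' + d), (i, c::int, d::int))"
    show "bij ?l" by (rule o_bij[where g = ?m]) (auto simp: fun_eq_iff)
    show "W \<circ> ?l = ?V" by (simp add: o_def)
  qed
  show "Poly_Mapping.lookup (app E (app E' F) a b) k = Poly_Mapping.lookup (app (comp E E') F a b) k"
    using L1 L2 L3 R1 R2 R3 by simp
qed


lemma fin_lb: "finite I \<Longrightarrow> \<exists>m::int. \<forall>i\<in>I. m \<le> f i"
  using bdd_below_finite[of "f ` I"] by (auto simp: bdd_below_def)

type_synonym 'i sser = "int \<Rightarrow> int \<Rightarrow> 'i set"

definition sgood :: "'i sser \<Rightarrow> bool" where
  "sgood K \<longleftrightarrow> (\<exists>B. \<forall>a b. K a b \<noteq> {} \<longrightarrow> B \<le> b) \<and> (\<forall>b. \<exists>A. \<forall>a. K a b \<noteq> {} \<longrightarrow> A \<le> a)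
     \<and> (\<forall>b. finite (\<Union>a. K a b))"

definition svfin :: "'i sser \<Rightarrow> bool" where
  "svfin K \<longleftrightarrow> finite (\<Union>a. \<Union>b. K a b)"

definition sdpos :: "('i \<Rightarrow> 'j sser) \<Rightarrow> bool" where
  "sdpos EK \<longleftrightarrow> (\<forall>i c d. EK i c d \<noteq> {} \<longrightarrow> 0 \<le> d)"

definition scomp :: "'i sser \<Rightarrow> ('i \<Rightarrow> 'j sser) \<Rightarrow> 'j sser" where
  "scomp K EK = (\<lambda>a b. {k. \<exists>i c d. i \<in> K (a - c) (b - d) \<and> k \<in> EK i c d})"

lemma fin_helper:
  assumes "finite I"
  shows "finite {(i, c, d). i \<in> I \<and> L i \<le> d \<and> d \<le> (U::int) \<and> lo i d \<le> c \<and> c \<le> (hi d::int)}"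
proof -
  have "{(i, c, d). i \<in> I \<and> L i \<le> d \<and> d \<le> U \<and> lo i d \<le> c \<and> c \<le> hi d} \<subseteq>
     (\<Union>i\<in>I. \<Union>d\<in>{L i..U}. (\<lambda>c. (i, c, d)) ` {lo i d..hi d})"
  proof (safe)
    fix i c d assume "i \<in> I" "L i \<le> d" "d \<le> U" "lo i d \<le> c" "c \<le> hi d"
    then show "(i, c, d) \<in> (\<Union>i\<in>I. \<Union>d\<in>{L i..U}. (\<lambda>c. (i, c, d)) ` {lo i d..hi d})"
      by (intro UN_I[of i] UN_I[of d] image_eqI[of _ _ c]) auto
  qed
  moreover have "finite (\<Union>i\<in>I. \<Union>d\<in>{L i..U}. (\<lambda>c. (i, c, d)) ` {lo i d..hi d})"
    using assms by auto
  ultimately show ?thesis by (rule finite_subset)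
qed

lemma sgood_E:
  assumes "sgood K"
  obtains B A where "\<And>a b. K a b \<noteq> {} \<Longrightarrow> B \<le> b" "\<And>a b. K a b \<noteq> {} \<Longrightarrow> A b \<le> a"
     "\<And>b. finite (\<Union>a. K a b)"
proof -
  from assms obtain B where "\<forall>a b. K a b \<noteq> {} \<longrightarrow> B \<le> b" unfolding sgood_def by blast
  moreover from assms have "\<forall>b. \<exists>A. \<forall>a. K a b \<noteq> {} \<longrightarrow> A \<le> a" unfolding sgood_def by blast
  then obtain A where "\<forall>b a. K a b \<noteq> {} \<longrightarrow> A b \<le> a" by metis
  moreover have "\<And>b. finite (\<Union>a. K a b)" using assms unfolding sgood_def by blast
  ultimately show ?thesis using that by blast
qed

lemma sgood_op_E:
  assumes "\<forall>i. sgood (EK i)"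
  obtains B A where "\<And>i a b. EK i a b \<noteq> {} \<Longrightarrow> B i \<le> b" "\<And>i a b. EK i a b \<noteq> {} \<Longrightarrow> A i b \<le> a"
     "\<And>i b. finite (\<Union>a. EK i a b)"
proof -
  from assms have "\<forall>i. \<exists>B. \<forall>a b. EK i a b \<noteq> {} \<longrightarrow> B \<le> b" unfolding sgood_def by blast
  then obtain B where "\<forall>i a b. EK i a b \<noteq> {} \<longrightarrow> B i \<le> b" by metis
  moreover from assms have "\<forall>i b. \<exists>A. \<forall>a. EK i a b \<noteq> {} \<longrightarrow> A \<le> a" unfolding sgood_def by blast
  then obtain A where "\<forall>i b a. EK i a b \<noteq> {} \<longrightarrow> A i b \<le> a" by metis
  moreover have "\<And>i b. finite (\<Union>a. EK i a b)" using assms unfolding sgood_def by blast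
  ultimately show ?thesis using that by blast
qed

lemma s_region:
  assumes K: "sgood K" and E: "\<forall>i. sgood (EK i)" and alt: "sdpos EK \<or> svfin K"
  shows "\<exists>Bd. \<forall>a b i c d. i \<in> K (a - c) (b - d) \<and> EK i c d \<noteq> {} \<longrightarrow> Bd \<le> b"
    and "\<exists>P. finite P \<and> (\<forall>a i c d. i \<in> K (a - c) (b - d) \<and> EK i c d \<noteq> {} \<longrightarrow> (i, d) \<in> P)"
proof -
  obtain B AF where hK: "\<And>a b. K a b \<noteq> {} \<Longrightarrow> B \<le> b" "\<And>a b. K a b \<noteq> {} \<Longrightarrow> AF b \<le> a"
     "\<And>b. finite (\<Union>a. K a b)" using sgood_E[OF K] by blast
  obtain BE AE where hE: "\<And>i a b. EK i a b \<noteq> {} \<Longrightarrow> BE i \<le> b" "\<And>i a b. EK i a b \<noteq> {} \<Longrightarrow> AE i b \<le> a"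
     "\<And>i b. finite (\<Union>a. EK i a b)" using sgood_op_E[OF E] by blast
  have "(\<exists>Bd. \<forall>a b i c d. i \<in> K (a - c) (b - d) \<and> EK i c d \<noteq> {} \<longrightarrow> Bd \<le> b) \<and>
    (\<exists>P. finite P \<and> (\<forall>a i c d. i \<in> K (a - c) (b - d) \<and> EK i c d \<noteq> {} \<longrightarrow> (i, d) \<in> P))"
    using alt
  proof
    assume dp: "sdpos EK"
    let ?P = "\<Union>d\<in>{0..b-B}. (\<lambda>i. (i, d)) ` (\<Union>a. K a (b - d))"
    have "finite ?P" using hK(3) by auto
    moreover have "\<forall>a i c d. i \<in> K (a - c) (b - d) \<and> EK i c d \<noteq> {} \<longrightarrow> (i, d) \<in> ?P"
    proof (intro allI impI)
      fix a i c d assume h: "i \<in> K (a - c) (b - d) \<and> EK i c d \<noteq> {}"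
      then have "B \<le> b - d" using hK(1)[of "a - c" "b - d"] by blast
      moreover have "0 \<le> d" using h dp unfolding sdpos_def by blast
      ultimately show "(i, d) \<in> ?P" using h
        by (intro UN_I[of d] image_eqI[of _ _ i] UN_I[of "a - c"]) auto
    qed
    moreover have "\<forall>a b i c d. i \<in> K (a - c) (b - d) \<and> EK i c d \<noteq> {} \<longrightarrow> B \<le> b"
    proof (intro allI impI)
      fix a b i c d assume h: "i \<in> K (a - c) (b - d) \<and> EK i c d \<noteq> {}"
      then have "B \<le> b - d" using hK(1)[of "a - c" "b - d"] by blast
      moreover have "0 \<le> d" using h dp unfolding sdpos_def by blast
      ultimately show "B \<le> b" by simp
    qed
    ultimately show ?thesis by blast
  next
    assume vf: "svfin K"
    let ?I = "\<Union>a. \<Union>b. K a b"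
    have fI: "finite ?I" using vf unfolding svfin_def .
    obtain m where m: "\<forall>i\<in>?I. m \<le> BE i" using fin_lb[OF fI] by blast
    let ?P = "?I \<times> {m..b - B}"
    have "finite ?P" using fI by auto
    moreover have "\<forall>a i c d. i \<in> K (a - c) (b - d) \<and> EK i c d \<noteq> {} \<longrightarrow> (i, d) \<in> ?P"
    proof (intro allI impI)
      fix a i c d assume h: "i \<in> K (a - c) (b - d) \<and> EK i c d \<noteq> {}"
      then have "B \<le> b - d" using hK(1)[of "a - c" "b - d"] by blast
      moreover have "i \<in> ?I" using h by blast
      moreover have "BE i \<le> d" using h hE(1) by blast
      ultimately show "(i, d) \<in> ?P" using m by force
    qed
    moreover have "\<forall>a b i c d. i \<in> K (a - c) (b - d) \<and> EK i c d \<noteq> {} \<longrightarrow> B + m \<le> b"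
    proof (intro allI impI)
      fix a b i c d assume h: "i \<in> K (a - c) (b - d) \<and> EK i c d \<noteq> {}"
      then have "B \<le> b - d" using hK(1)[of "a - c" "b - d"] by blast
      moreover have "i \<in> ?I" using h by blast
      moreover have "BE i \<le> d" using h hE(1) by blast
      ultimately show "B + m \<le> b" using m by force
    qed
    ultimately show ?thesis by blast
  qed
  then show "\<exists>Bd. \<forall>a b i c d. i \<in> K (a - c) (b - d) \<and> EK i c d \<noteq> {} \<longrightarrow> Bd \<le> b"
    and "\<exists>P. finite P \<and> (\<forall>a i c d. i \<in> K (a - c) (b - d) \<and> EK i c d \<noteq> {} \<longrightarrow> (i, d) \<in> P)"
    by blast+
qed

lemma s_fin:
  assumes K: "sgood K" and E: "\<forall>i. sgood (EK i)" and alt: "sdpos EK \<or> svfin K"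
  shows "finite {(i, c, d). i \<in> K (a - c) (b - d) \<and> EK i c d \<noteq> {}}"
proof -
  obtain B AF where hK: "\<And>a b. K a b \<noteq> {} \<Longrightarrow> B \<le> b" "\<And>a b. K a b \<noteq> {} \<Longrightarrow> AF b \<le> a"
     "\<And>b. finite (\<Union>a. K a b)" using sgood_E[OF K] by blast
  obtain BE AE where hE: "\<And>i a b. EK i a b \<noteq> {} \<Longrightarrow> BE i \<le> b" "\<And>i a b. EK i a b \<noteq> {} \<Longrightarrow> AE i b \<le> a"
     "\<And>i b. finite (\<Union>a. EK i a b)" using sgood_op_E[OF E] by blast
  from s_region(2)[OF K E alt, of b] obtain P where P: "finite P" "\<forall>a i c d. i \<in> K (a - c) (b - d) \<and> EK i c d \<noteq> {} \<longrightarrow> (i, d) \<in> P"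
    by (elim exE conjE)
  have "{(i, c, d). i \<in> K (a - c) (b - d) \<and> EK i c d \<noteq> {}} \<subseteq>
     (\<Union>p\<in>P. (\<lambda>c. (fst p, c, snd p)) ` {AE (fst p) (snd p)..a - AF (b - snd p)})"
  proof (rule subsetI)
    fix x assume "x \<in> {(i, c, d). i \<in> K (a - c) (b - d) \<and> EK i c d \<noteq> {}}"
    then obtain i c d where x: "x = (i, c, d)" and h: "i \<in> K (a - c) (b - d)" "EK i c d \<noteq> {}" by blast
    then have "(i, d) \<in> P" using P(2) by blast
    moreover have "AF (b - d) \<le> a - c" using hK(2) h by blast
    moreover have "AE i d \<le> c" using hE(2) h by blast
    ultimately show "x \<in> (\<Union>p\<in>P. (\<lambda>c. (fst p, c, snd p)) ` {AE (fst p) (snd p)..a - AF (b - snd p)})"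
      unfolding x by (intro UN_I[of "(i, d)"] image_eqI[of _ _ c]) simp_all
  qed
  moreover have "finite (\<Union>p\<in>P. (\<lambda>c. (fst p, c, snd p)) ` {AE (fst p) (snd p)..a - AF (b - snd p)})"
    by (rule finite_UN_I[OF P(1)]) simp
  ultimately show ?thesis by (rule finite_subset)
qed

lemma s_good:
  assumes K: "sgood K" and E: "\<forall>i. sgood (EK i)" and alt: "sdpos EK \<or> svfin K"
  shows "sgood (scomp K EK)"
proof -
  obtain B AF where hK: "\<And>a b. K a b \<noteq> {} \<Longrightarrow> B \<le> b" "\<And>a b. K a b \<noteq> {} \<Longrightarrow> AF b \<le> a"
     "\<And>b. finite (\<Union>a. K a b)" using sgood_E[OF K] by blast
  obtain BE AE where hE: "\<And>i a b. EK i a b \<noteq> {} \<Longrightarrow> BE i \<le> b" "\<And>i a b. EK i a b \<noteq> {} \<Longrightarrow> AE i b \<le> a"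
     "\<And>i b. finite (\<Union>a. EK i a b)" using sgood_op_E[OF E] by blast
  from s_region(1)[OF K E alt] obtain Bd where Bd: "\<forall>a b i c d. i \<in> K (a - c) (b - d) \<and> EK i c d \<noteq> {} \<longrightarrow> Bd \<le> b"
    by (elim exE)
  have low: "\<exists>B. \<forall>a b. scomp K EK a b \<noteq> {} \<longrightarrow> B \<le> b"
    using Bd unfolding scomp_def by blast
  have row: "(\<exists>A. \<forall>a. scomp K EK a b \<noteq> {} \<longrightarrow> A \<le> a) \<and> finite (\<Union>a. scomp K EK a b)" for b
  proof -
    from s_region(2)[OF K E alt, of b] obtain P where P: "finite P" "\<forall>a i c d. i \<in> K (a - c) (b - d) \<and> EK i c d \<noteq> {} \<longrightarrow> (i, d) \<in> P"
      by (elim exE conjE)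
    obtain m where m: "\<forall>p\<in>P. m \<le> AF (b - snd p) + AE (fst p) (snd p)"
      using fin_lb[OF P(1), of "\<lambda>p. AF (b - snd p) + AE (fst p) (snd p)"] by (elim exE) 
    have "\<forall>a. scomp K EK a b \<noteq> {} \<longrightarrow> m \<le> a"
    proof (intro allI impI)
      fix a assume "scomp K EK a b \<noteq> {}"
      then obtain i c d k where h: "i \<in> K (a - c) (b - d)" "k \<in> EK i c d" unfolding scomp_def by blast
      then have "(i, d) \<in> P" using P(2) by blast
      then have "m \<le> AF (b - d) + AE i d" using m by force
      moreover have "AF (b - d) \<le> a - c" using hK(2) h by blast
      moreover have "AE i d \<le> c" using hE(2) h by blast
      ultimately show "m \<le> a" by simp
    qed
    moreover have "(\<Union>a. scomp K EK a b) \<subseteq> (\<Union>p\<in>P. \<Union>c. EK (fst p) c (snd p))"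
    proof
      fix k assume "k \<in> (\<Union>a. scomp K EK a b)"
      then obtain a i c d where h: "i \<in> K (a - c) (b - d)" "k \<in> EK i c d" unfolding scomp_def by blast
      then have "(i, d) \<in> P" using P(2) by blast
      with h show "k \<in> (\<Union>p\<in>P. \<Union>c. EK (fst p) c (snd p))" by force
    qed
    moreover have "finite (\<Union>p\<in>P. \<Union>c. EK (fst p) c (snd p))"
      by (rule finite_UN_I[OF P(1)]) (rule hE(3))
    ultimately show ?thesis by (meson finite_subset)
  qed
  show ?thesis unfolding sgood_def using low row by blast
qed

lemma s_vfin:
  assumes "svfin K" "\<forall>i. svfin (EK i)"
  shows "svfin (scomp K EK)"
proof -
  have "(\<Union>a. \<Union>b. scomp K EK a b) \<subseteq> (\<Union>i\<in>(\<Union>a. \<Union>b. K a b). \<Union>c. \<Union>d. EK i c d)"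
    unfolding scomp_def by blast
  moreover have "finite (\<Union>i\<in>(\<Union>a. \<Union>b. K a b). \<Union>c. \<Union>d. EK i c d)"
  proof (rule finite_UN_I)
    show "finite (\<Union>a. \<Union>b. K a b)" using assms(1) unfolding svfin_def .
    show "finite (\<Union>c. \<Union>d. EK i c d)" for i using assms(2) unfolding svfin_def by blast
  qed
  ultimately show ?thesis unfolding svfin_def by (rule finite_subset)
qed


definition spt :: "'i ser2 \<Rightarrow> 'i sser" where "spt F = (\<lambda>a b. Poly_Mapping.keys (F a b))"
definition EKo :: "('i \<Rightarrow> 'j ser2) \<Rightarrow> 'i \<Rightarrow> 'j sser" where "EKo E = (\<lambda>i. spt (E i))"

definition good :: "'i ser2 \<Rightarrow> bool" where "good F \<longleftrightarrow> sgood (spt F)"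
definition vfin :: "'i ser2 \<Rightarrow> bool" where "vfin F \<longleftrightarrow> svfin (spt F)"
definition gop :: "('i \<Rightarrow> 'j ser2) \<Rightarrow> bool" where "gop E \<longleftrightarrow> (\<forall>i. good (E i))"
definition vop :: "('i \<Rightarrow> 'j ser2) \<Rightarrow> bool" where "vop E \<longleftrightarrow> (\<forall>i. vfin (E i))"
definition dpos :: "('i \<Rightarrow> 'j ser2) \<Rightarrow> bool" where "dpos E \<longleftrightarrow> (\<forall>i c d. E i c d \<noteq> 0 \<longrightarrow> 0 \<le> d)"

lemma keys_empty_iff: "Poly_Mapping.keys v = {} \<longleftrightarrow> v = 0"
  by (metis keys_zero lookup_zero not_in_keys_iff_lookup_eq_zero poly_mapping_eqI empty_iff)

lemma dpos_sdpos: "dpos E \<Longrightarrow> sdpos (EKo E)"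
  unfolding dpos_def sdpos_def EKo_def spt_def by (auto simp: keys_empty_iff)

lemma gop_sgood: "gop E \<Longrightarrow> \<forall>i. sgood (EKo E i)"
  unfolding gop_def good_def EKo_def by simp

lemma sgood_mono: "(\<And>a b. K a b \<subseteq> K' a b) \<Longrightarrow> sgood K' \<Longrightarrow> sgood K"
  unfolding sgood_def
proof (elim conjE exE, intro conjI allI)
  fix B assume sub: "\<And>a b. K a b \<subseteq> K' a b" and h1: "\<forall>a b. K' a b \<noteq> {} \<longrightarrow> B \<le> b"
    and h2: "\<forall>b. \<exists>A. \<forall>a. K' a b \<noteq> {} \<longrightarrow> A \<le> a" and h3: "\<forall>b. finite (\<Union>a. K' a b)"
  show "\<exists>B. \<forall>a b. K a b \<noteq> {} \<longrightarrow> B \<le> b" using h1 sub by blast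
  show "\<exists>A. \<forall>a. K a b \<noteq> {} \<longrightarrow> A \<le> a" for b using h2 sub by blast
  show "finite (\<Union>a. K a b)" for b using h3 sub by (meson UN_mono finite_subset order_refl)
qed

lemma svfin_mono:
  assumes sub: "\<And>a b. K a b \<subseteq> K' a b" and f: "svfin K'" shows "svfin K"
proof -
  have "(\<Union>a. \<Union>b. K a b) \<subseteq> (\<Union>a. \<Union>b. K' a b)"
  proof
    fix x assume "x \<in> (\<Union>a. \<Union>b. K a b)"
    then obtain a b where "x \<in> K a b" by blast
    then have "x \<in> K' a b" using sub by blast
    then show "x \<in> (\<Union>a. \<Union>b. K' a b)" by blast
  qed
  then show ?thesis using f unfolding svfin_def by (rule finite_subset)
qed

lemma keys_app: "Poly_Mapping.keys (app E F a b) \<subseteq> scomp (spt F) (EKo E) a b"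
proof
  fix k assume k: "k \<in> Poly_Mapping.keys (app E F a b)"
  let ?f = "\<lambda>(i, c, d). smul (Poly_Mapping.lookup (F (a - c) (b - d)) i) (E i c d)"
  have fin: "finite {x. ?f x \<noteq> 0}"
  proof (rule ccontr)
    assume "infinite {x. ?f x \<noteq> 0}"
    then have "app E F a b = 0" unfolding app_def by simp
    with k show False by simp
  qed
  have "Poly_Mapping.lookup (app E F a b) k \<noteq> 0" using k by (simp add: in_keys_iff)
  then have "Sum_any (\<lambda>x. Poly_Mapping.lookup (?f x) k) \<noteq> 0"
    unfolding app_def SA_lookup[OF fin] .
  then obtain x where "Poly_Mapping.lookup (?f x) k \<noteq> 0" using SA_nonzero by blast
  then obtain i c d where "Poly_Mapping.lookup (F (a - c) (b - d)) i \<noteq> 0" "Poly_Mapping.lookup (E i c d) k \<noteq> 0"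
    by (cases x) auto
  then show "k \<in> scomp (spt F) (EKo E) a b"
    unfolding scomp_def spt_def EKo_def by (auto simp: in_keys_iff)
qed

lemma fin_app_good:
  assumes "good F" "gop E" "dpos E \<or> vfin F"
  shows "fin_app E F"
  unfolding fin_app_def
proof (intro allI)
  fix a b
  have "finite {(i, c, d). i \<in> spt F (a - c) (b - d) \<and> EKo E i c d \<noteq> {}}"
    by (rule s_fin) (use assms dpos_sdpos gop_sgood in \<open>auto simp: good_def vfin_def\<close>)
  then show "finite {(i, c, d). Poly_Mapping.lookup (F (a - c) (b - d)) i \<noteq> 0 \<and> E i c d \<noteq> 0}"
    by (rule rev_finite_subset) (auto simp: spt_def EKo_def in_keys_iff keys_empty_iff)
qed

lemma good_app:
  assumes "good F" "gop E" "dpos E \<or> vfin F"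
  shows "good (app E F)"
proof -
  have "sgood (scomp (spt F) (EKo E))"
    by (rule s_good) (use assms dpos_sdpos gop_sgood in \<open>auto simp: good_def vfin_def\<close>)
  then show ?thesis unfolding good_def
    by (rule sgood_mono[rotated]) (simp add: keys_app spt_def[of "app E F"])
qed

lemma vfin_app:
  assumes "vfin F" "vop E"
  shows "vfin (app E F)"
proof -
  have "svfin (scomp (spt F) (EKo E))"
    by (rule s_vfin) (use assms in \<open>auto simp: vfin_def vop_def EKo_def\<close>)
  then show ?thesis unfolding vfin_def
    by (rule svfin_mono[rotated]) (simp add: keys_app spt_def[of "app E F"])
qed

lemma fin6_good:
  assumes F: "good F" and E': "gop E'" and E: "gop E" and a1: "dpos E' \<or> vfin F"
    and a2: "dpos E \<or> (vfin F \<and> vop E')"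
  shows "fin6 E E' F"
  unfolding fin6_def
proof (intro allI)
  fix a b
  let ?K = "scomp (spt F) (EKo E')"
  have sK: "sgood ?K"
    by (rule s_good) (use F E' a1 dpos_sdpos gop_sgood in \<open>auto simp: good_def vfin_def\<close>)
  have a2': "sdpos (EKo E) \<or> svfin ?K"
  proof (cases "dpos E")
    case True then show ?thesis using dpos_sdpos by blast
  next
    case False
    then have "vfin F" "vop E'" using a2 by auto
    then have "svfin ?K" by (intro s_vfin) (auto simp: vfin_def vop_def EKo_def)
    then show ?thesis by blast
  qed
  have finP: "finite {(i, c, d). i \<in> ?K (a - c) (b - d) \<and> EKo E i c d \<noteq> {}}"
    by (rule s_fin[OF sK gop_sgood[OF E] a2'])
  have fQ: "fin_app E' F" by (rule fin_app_good[OF F E' a1])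
  let ?Q = "\<lambda>(i, c, d). (\<lambda>(j, c', d'). (j, c', d', i, c, d)) `
      {(j, c', d'). Poly_Mapping.lookup (F (a - c - c') (b - d - d')) j \<noteq> 0 \<and> E' j c' d' \<noteq> 0}"
  let ?U = "\<Union>p\<in>{(i, c, d). i \<in> ?K (a - c) (b - d) \<and> EKo E i c d \<noteq> {}}. ?Q p"
  have finU: "finite ?U"
  proof (rule finite_UN_I[OF finP])
    fix p show "finite (?Q p)"
    proof (cases p)
      case (fields i c d)
      have "finite {(j, c', d'). Poly_Mapping.lookup (F (a - c - c') (b - d - d')) j \<noteq> 0 \<and> E' j c' d' \<noteq> 0}"
        using fQ unfolding fin_app_def by blast
      then show ?thesis using fields by simp
    qed
  qed
  have sub: "{(j, c', d', i, c, d).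
     Poly_Mapping.lookup (F (a - c - c') (b - d - d')) j \<noteq> 0 \<and>
     Poly_Mapping.lookup (E' j c' d') i \<noteq> 0 \<and> E i c d \<noteq> 0} \<subseteq> ?U"
  proof (rule subsetI)
    fix x assume "x \<in> {(j, c', d', i, c, d).
     Poly_Mapping.lookup (F (a - c - c') (b - d - d')) j \<noteq> 0 \<and>
     Poly_Mapping.lookup (E' j c' d') i \<noteq> 0 \<and> E i c d \<noteq> 0}"
    then obtain j c' d' i c d where x: "x = (j, c', d', i, c, d)" and
      h: "Poly_Mapping.lookup (F (a - c - c') (b - d - d')) j \<noteq> 0"
         "Poly_Mapping.lookup (E' j c' d') i \<noteq> 0" "E i c d \<noteq> 0" by blast
    have "i \<in> ?K (a - c) (b - d)" unfolding scomp_def spt_def EKo_def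
      using h(1,2) by (auto simp: in_keys_iff)
    moreover have "EKo E i c d \<noteq> {}" using h(3) by (simp add: EKo_def spt_def keys_empty_iff)
    moreover have "E' j c' d' \<noteq> 0" using h(2) by auto
    ultimately show "x \<in> ?U"
      unfolding x using h(1)
      by (intro UN_I[of "(i, c, d)"]) (auto intro!: image_eqI[of _ _ "(j, c', d')"])
  qed
  show "finite {(j, c', d', i, c, d).
     Poly_Mapping.lookup (F (a - c - c') (b - d - d')) j \<noteq> 0 \<and>
     Poly_Mapping.lookup (E' j c' d') i \<noteq> 0 \<and> E i c d \<noteq> 0}"
    using finite_subset[OF sub finU] .
qed

lemma assoc_good:
  assumes "good F" "gop E'" "gop E" "dpos E' \<or> vfin F" "dpos E \<or> (vfin F \<and> vop E')"
  shows "app E (app E' F) = app (comp E E') F"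
  by (rule app_assoc[OF fin_app_good[OF assms(1,2,4)] fin6_good[OF assms]])

lemma gop_comp:
  assumes "gop E'" "gop E" "dpos E \<or> vop E'"
  shows "gop (comp E E')"
  unfolding gop_def comp_def
proof
  fix j
  show "good (app E (E' j))"
    by (rule good_app) (use assms in \<open>auto simp: gop_def vop_def\<close>)
qed

lemma vop_comp: "vop E' \<Longrightarrow> vop E \<Longrightarrow> vop (comp E E')"
  unfolding vop_def comp_def by (simp add: vfin_app vop_def)

lemma app_nonzero': "app E F a b \<noteq> 0 \<Longrightarrow> \<exists>i c d. F (a - c) (b - d) \<noteq> 0 \<and> E i c d \<noteq> 0"
  by (metis app_nonzero lookup_zero)

lemma dpos_comp: "dpos E' \<Longrightarrow> dpos E \<Longrightarrow> dpos (comp E E')"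
  unfolding dpos_def comp_def
proof (intro allI impI)
  fix j c d assume h1: "\<forall>i c d. E' i c d \<noteq> 0 \<longrightarrow> 0 \<le> d" and h2: "\<forall>i c d. E i c d \<noteq> 0 \<longrightarrow> 0 \<le> d"
    and "app E (E' j) c d \<noteq> 0"
  then obtain i c1 d1 where "E' j (c - c1) (d - d1) \<noteq> 0" "E i c1 d1 \<noteq> 0" using app_nonzero' by blast
  then show "0 \<le> d" using h1 h2 by force
qed


lemma SA_inj_reindex:
  fixes g :: "'a \<Rightarrow> 'c::comm_monoid_add"
  assumes inj: "inj h" and z: "\<And>x. x \<notin> range h \<Longrightarrow> g x = 0"
  shows "Sum_any g = Sum_any (\<lambda>y. g (h y))"
proof -
  have supp: "{x. g x \<noteq> 0} = h ` {y. g (h y) \<noteq> 0}"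
  proof (rule set_eqI, rule iffI)
    fix x assume "x \<in> {x. g x \<noteq> 0}"
    then have gx: "g x \<noteq> 0" by simp
    then have "x \<in> range h" using z by blast
    then obtain y where "x = h y" by blast
    with gx show "x \<in> h ` {y. g (h y) \<noteq> 0}" by blast
  qed auto
  show ?thesis
  proof (cases "finite {y. g (h y) \<noteq> 0}")
    case True
    then have "finite {x. g x \<noteq> 0}" using supp by simp
    then have "Sum_any g = sum g (h ` {y. g (h y) \<noteq> 0})" using supp Sum_any.expand_set by metis
    also have "\<dots> = sum (g \<circ> h) {y. g (h y) \<noteq> 0}" by (rule sum.reindex) (use inj in \<open>auto intro: inj_on_subset\<close>)
    also have "\<dots> = Sum_any (\<lambda>y. g (h y))" by (simp add: Sum_any.expand_set o_def)
    finally show ?thesis .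
  next
    case False
    then have "infinite {x. g x \<noteq> 0}" using supp finite_imageD inj inj_on_subset by (metis subset_UNIV)
    with False show ?thesis by simp
  qed
qed

definition pf :: "('i \<Rightarrow> 'j) \<Rightarrow> 'i vec \<Rightarrow> 'j vec" where
  "pf h v = Sum_any (\<lambda>i. smul (Poly_Mapping.lookup v i) (bv (h i)))"

lemma lookup_pf_gen: "Poly_Mapping.lookup (pf h v) k = Sum_any (\<lambda>i. Poly_Mapping.lookup v i * (if h i = k then 1 else 0))"
proof -
  have "finite {i. smul (Poly_Mapping.lookup v i) (bv (h i)) \<noteq> 0}"
    by (rule finite_subset[of _ "Poly_Mapping.keys v"]) (auto simp: in_keys_iff)
  then show ?thesis unfolding pf_def by (simp add: SA_lookup lookup_bv eq_commute[of k])
qed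

lemma lookup_pf: "inj h \<Longrightarrow> Poly_Mapping.lookup (pf h v) (h i) = Poly_Mapping.lookup v i"
  unfolding lookup_pf_gen by (simp add: inj_eq mult_when[symmetric] if_distrib cong: if_cong)

lemma lookup_pf_out: "k \<notin> range h \<Longrightarrow> Poly_Mapping.lookup (pf h v) k = 0"
proof -
  assume "k \<notin> range h"
  then have "\<forall>i. h i \<noteq> k" by auto
  then show ?thesis unfolding lookup_pf_gen by simp
qed

lemma pf_eq_iff: "inj h \<Longrightarrow> pf h u = pf h v \<longleftrightarrow> u = v"
proof
  assume "inj h" "pf h u = pf h v"
  then show "u = v" by (metis lookup_pf poly_mapping_eqI)
qed simp

lemma pf_zero[simp]: "pf h 0 = 0" unfolding pf_def by simp

lemma pf_zero_iff: "inj h \<Longrightarrow> pf h v = 0 \<longleftrightarrow> v = 0"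
  using pf_eq_iff[of h v 0] by simp

lemma pf_smul: "pf h (smul c v) = smul c (pf h v)"
proof (rule poly_mapping_eqI)
  fix k
  have "Sum_any (\<lambda>i. c * Poly_Mapping.lookup v i * (if h i = k then 1 else 0)) =
        c * Sum_any (\<lambda>i. Poly_Mapping.lookup v i * (if h i = k then 1 else 0))"
    by (simp add: SA_mult_right mult.assoc)
  then show "Poly_Mapping.lookup (pf h (smul c v)) k = Poly_Mapping.lookup (smul c (pf h v)) k"
    by (simp add: lookup_pf_gen)
qed

lemma pf_SA:
  assumes inj: "inj h"
  shows "pf h (Sum_any f) = Sum_any (\<lambda>x. pf h (f x))"
proof (cases "finite {x. f x \<noteq> 0}")
  case True
  have fin2: "finite {x. pf h (f x) \<noteq> 0}" using True pf_zero_iff[OF inj] by simp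
  show ?thesis
  proof (rule poly_mapping_eqI)
    fix k
    show "Poly_Mapping.lookup (pf h (Sum_any f)) k = Poly_Mapping.lookup (Sum_any (\<lambda>x. pf h (f x))) k"
    proof (cases "k \<in> range h")
      case True
      then obtain i where k: "k = h i" by blast
      show ?thesis unfolding k lookup_pf[OF inj] SA_lookup[OF fin2] SA_lookup[OF \<open>finite {x. f x \<noteq> 0}\<close>]
        by simp
    next
      case False
      then show ?thesis unfolding SA_lookup[OF fin2] by (simp add: lookup_pf_out)
    qed
  qed
next
  case False
  then have "infinite {x. pf h (f x) \<noteq> 0}" using pf_zero_iff[OF inj] by simp
  with False show ?thesis by simp
qed

lemma app_pf_right:
  assumes inj: "inj h"
  shows "app E (\<lambda>x y. pf h (G x y)) = app (\<lambda>k. E (h k)) G"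
proof (intro ext)
  fix a b
  let ?f = "\<lambda>(i, c, d). smul (Poly_Mapping.lookup (pf h (G (a - c) (b - d))) i) (E i c d)"
  have "app E (\<lambda>x y. pf h (G x y)) a b = Sum_any (\<lambda>y. ?f ((\<lambda>(k, c, d). (h k, c, d)) y))"
    unfolding app_def
    by (rule SA_inj_reindex) (auto simp: inj_def inj_eq[OF inj] lookup_pf_out image_iff split: prod.splits)
  also have "\<dots> = Sum_any (\<lambda>(k, c, d). smul (Poly_Mapping.lookup (pf h (G (a - c) (b - d))) (h k)) (E (h k) c d))"
    by (rule Sum_any.cong) (simp split: prod.splits)
  also have "\<dots> = app (\<lambda>k. E (h k)) G a b"
    unfolding app_def lookup_pf[OF inj] ..
  finally show "app E (\<lambda>x y. pf h (G x y)) a b = app (\<lambda>k. E (h k)) G a b" .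
qed

lemma app_pf_left:
  assumes inj: "inj h"
  shows "app (\<lambda>k x y. pf h (E k x y)) G = (\<lambda>x y. pf h (app E G x y))"
  unfolding app_def by (simp add: pf_SA[OF inj] pf_smul case_prod_beta)

lemma smul_1[simp]: "smul 1 v = v" by (rule poly_mapping_eqI) simp

definition pop :: "('i \<Rightarrow> 'j) \<Rightarrow> 'i \<Rightarrow> 'j ser2" where
  "pop p = (\<lambda>i. const2 (bv (p i)))"

lemma app_const:
  "app E (const2 t) a b = Sum_any (\<lambda>i. smul (Poly_Mapping.lookup t i) (E i a b))"
  unfolding app_def
  by (subst SA_inj_reindex[where h = "\<lambda>i. (i, a, b)"]) (auto simp: inj_def const2_def image_iff)

lemma app_const_bv[simp]: "app E (const2 (bv j)) = E j"
proof (intro ext)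
  fix a b
  have "Sum_any (\<lambda>i. smul (Poly_Mapping.lookup (bv j) i) (E i a b)) = Sum_any (\<lambda>i. if i = j then E i a b else 0)"
    by (rule Sum_any.cong) (simp add: lookup_bv)
  then show "app E (const2 (bv j)) a b = E j a b" by (simp add: app_const)
qed

lemma comp_pop_right: "comp E (pop p) = (\<lambda>i. E (p i))"
  unfolding comp_def pop_def by simp

lemma app_pop: "app (pop p) G = (\<lambda>a b. pf p (G a b))"
proof (intro ext)
  fix a b
  have "app (pop p) G a b = Sum_any (\<lambda>i. smul (Poly_Mapping.lookup (G a b) i) (bv (p i)))"
    unfolding app_def pop_def
    by (subst SA_inj_reindex[where h = "\<lambda>i. (i, 0, 0)"]) (auto simp: inj_def const2_def image_iff)
  then show "app (pop p) G a b = pf p (G a b)" unfolding pf_def .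
qed

lemma pf_id: "pf (\<lambda>x. x) v = v"
  by (rule poly_mapping_eqI) (metis lookup_pf inj_on_id2)

lemma pf_pf: "inj g \<Longrightarrow> inj h \<Longrightarrow> pf g (pf h v) = pf (\<lambda>x. g (h x)) v"
proof (rule poly_mapping_eqI)
  fix k assume g: "inj g" and h: "inj h"
  have gh: "inj (\<lambda>x. g (h x))" using g h by (simp add: inj_def)
  show "Poly_Mapping.lookup (pf g (pf h v)) k = Poly_Mapping.lookup (pf (\<lambda>x. g (h x)) v) k"
  proof (cases "k \<in> range (\<lambda>x. g (h x))")
    case True
    then obtain i where "k = g (h i)" by blast
    then show ?thesis using lookup_pf[OF g] lookup_pf[OF h] lookup_pf[OF gh] by simp
  next
    case False
    show ?thesis
    proof (cases "k \<in> range g")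
      case True
      then obtain j where j: "k = g j" by blast
      then have "j \<notin> range h" using False by blast
      then show ?thesis using j False lookup_pf[OF g] lookup_pf_out by metis
    next
      case False
      then show ?thesis using \<open>k \<notin> range (\<lambda>x. g (h x))\<close> lookup_pf_out by metis
    qed
  qed
qed

definition Id :: "'i \<Rightarrow> 'i ser2" where "Id = (\<lambda>j. const2 (bv j))"

lemma Id_pop: "Id = pop (\<lambda>x. x)" unfolding Id_def pop_def by simp

lemma app_Id[simp]: "app Id G = G"
  unfolding Id_pop app_pop pf_id ..

lemma comp_Id_left[simp]: "comp Id E = E" unfolding comp_def by simp
lemma comp_Id_right[simp]: "comp E Id = E" unfolding comp_def Id_def by simp


definition sc_ok :: "cser2 \<Rightarrow> bool" where
  "sc_ok g \<longleftrightarrow> (\<forall>c d. g c d \<noteq> 0 \<longrightarrow> 0 \<le> d) \<and> (\<forall>d. \<exists>A. \<forall>c. g c d \<noteq> 0 \<longrightarrow> A \<le> c)"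

lemma fls_nth_nz: "fls_nth f n \<noteq> 0 \<Longrightarrow> fls_subdegree f \<le> n"
  using fls_eq0_below_subdegree not_le by blast

lemma sc_ok_sub_x: "sc_ok (sub_x f)"
  unfolding sc_ok_def sub_x_def by (auto intro!: exI[of _ "fls_subdegree f"] fls_nth_nz)

lemma sc_ok_sub_negx: "sc_ok (sub_negx f)"
  unfolding sc_ok_def sub_negx_def by (auto intro!: exI[of _ "fls_subdegree f"] fls_nth_nz)

lemma sc_ok_sub_plus: "sc_ok (sub_plus s f)"
  unfolding sc_ok_def sub_plus_def
proof (intro conjI allI impI)
  fix d show "\<exists>A. \<forall>c. (if 0 \<le> d then s ^ nat d * (complex_of_int (c + d) gchoose nat d) * fls_nth f (c + d) else 0) \<noteq> 0 \<longrightarrow> A \<le> c"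
    by (rule exI[of _ "fls_subdegree f - d"]) (auto dest!: fls_nth_nz split: if_splits)
qed (auto split: if_splits)

lemma sub_zero[simp]: "sub_x 0 = (\<lambda>c d. 0)" "sub_negx 0 = (\<lambda>c d. 0)" "sub_plus s 0 = (\<lambda>c d. 0)"
  by (auto simp: sub_x_def sub_negx_def sub_plus_def fun_eq_iff)

definition opf :: "('i \<Rightarrow> 'p \<Rightarrow> cser2) \<Rightarrow> ('i \<Rightarrow> 'p \<Rightarrow> 'j) \<Rightarrow> 'i \<Rightarrow> 'j ser2" where
  "opf g h = (\<lambda>i c d. Sum_any (\<lambda>p. smul (g i p c d) (bv (h i p))))"

lemma opf_nonzero: "opf g h i c d \<noteq> 0 \<Longrightarrow> \<exists>p. g i p c d \<noteq> 0"
proof -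
  assume "opf g h i c d \<noteq> 0"
  then obtain p where "smul (g i p c d) (bv (h i p)) \<noteq> 0" unfolding opf_def using SA_nonzero by blast
  then show ?thesis using smul_eq0 by blast
qed

lemma keys_opf: "Poly_Mapping.keys (opf g h i c d) \<subseteq> h i ` {p. g i p c d \<noteq> 0}"
proof
  fix k assume k: "k \<in> Poly_Mapping.keys (opf g h i c d)"
  let ?f = "\<lambda>p. smul (g i p c d) (bv (h i p))"
  have fin: "finite {p. ?f p \<noteq> 0}"
  proof (rule ccontr)
    assume "infinite {p. ?f p \<noteq> 0}"
    then have "opf g h i c d = 0" unfolding opf_def by simp
    with k show False by simp
  qed
  have "Poly_Mapping.lookup (opf g h i c d) k \<noteq> 0" using k by (simp add: in_keys_iff)
  then have "Poly_Mapping.lookup (Sum_any ?f) k \<noteq> 0" unfolding opf_def .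
  then have "Sum_any (\<lambda>p. Poly_Mapping.lookup (?f p) k) \<noteq> 0"
    unfolding SA_lookup[OF fin] .
  then obtain p where "Poly_Mapping.lookup (?f p) k \<noteq> 0" using SA_nonzero by blast
  then show "k \<in> h i ` {p. g i p c d \<noteq> 0}" by (auto simp: lookup_bv split: if_splits)
qed

lemma opf_props:
  assumes fin: "\<And>i. finite {p. \<exists>c d. g i p c d \<noteq> 0}" and ok: "\<And>i p. sc_ok (g i p)"
  shows "gop (opf g h)" "vop (opf g h)" "dpos (opf g h)"
proof -
  have dp: "0 \<le> d" if nz: "opf g h i c d \<noteq> 0" for i c d
  proof -
    obtain p where "g i p c d \<noteq> 0" using opf_nonzero[OF nz] by blast
    then show "0 \<le> d" using ok[of i p] unfolding sc_ok_def by blast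
  qed
  show "dpos (opf g h)" unfolding dpos_def using dp by blast
  show "vop (opf g h)" unfolding vop_def vfin_def svfin_def spt_def
  proof
    fix i
    have "(\<Union>a. \<Union>b. Poly_Mapping.keys (opf g h i a b)) \<subseteq> h i ` {p. \<exists>c d. g i p c d \<noteq> 0}"
    proof
      fix k assume "k \<in> (\<Union>a. \<Union>b. Poly_Mapping.keys (opf g h i a b))"
      then obtain a b where "k \<in> Poly_Mapping.keys (opf g h i a b)" by blast
      then have "k \<in> h i ` {p. g i p a b \<noteq> 0}" by (rule subsetD[OF keys_opf])
      then show "k \<in> h i ` {p. \<exists>c d. g i p c d \<noteq> 0}" by blast
    qed
    then show "finite (\<Union>a. \<Union>b. Poly_Mapping.keys (opf g h i a b))"
      using fin by (meson finite_imageI finite_subset)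
  qed
  show "gop (opf g h)" unfolding gop_def good_def sgood_def spt_def
  proof (intro allI conjI)
    fix i
    show "\<exists>B. \<forall>a b. Poly_Mapping.keys (opf g h i a b) \<noteq> {} \<longrightarrow> B \<le> b"
      using dp unfolding keys_empty_iff by blast
    show "finite (\<Union>a. Poly_Mapping.keys (opf g h i a b))" for b
    proof -
      have "(\<Union>a. Poly_Mapping.keys (opf g h i a b)) \<subseteq> h i ` {p. \<exists>c d. g i p c d \<noteq> 0}"
      proof
        fix k assume "k \<in> (\<Union>a. Poly_Mapping.keys (opf g h i a b))"
        then obtain a where "k \<in> Poly_Mapping.keys (opf g h i a b)" by blast
        then have "k \<in> h i ` {p. g i p a b \<noteq> 0}" by (rule subsetD[OF keys_opf])
        then show "k \<in> h i ` {p. \<exists>c d. g i p c d \<noteq> 0}" by blast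
      qed
      then show ?thesis using fin by (meson finite_imageI finite_subset)
    qed
    show "\<exists>A. \<forall>a. Poly_Mapping.keys (opf g h i a b) \<noteq> {} \<longrightarrow> A \<le> a" for b
    proof -
      let ?P = "{p. \<exists>c d. g i p c d \<noteq> 0}"
      have "\<forall>p. \<exists>A. \<forall>c. g i p c b \<noteq> 0 \<longrightarrow> A \<le> c"
      proof
        fix p show "\<exists>A. \<forall>c. g i p c b \<noteq> 0 \<longrightarrow> A \<le> c" using ok[of i p] unfolding sc_ok_def by blast
      qed
      then have "\<exists>A. \<forall>p. \<forall>c. g i p c b \<noteq> 0 \<longrightarrow> A p \<le> c" by (rule choice)
      then obtain A where A: "\<forall>p. \<forall>c. g i p c b \<noteq> 0 \<longrightarrow> A p \<le> c" by (elim exE)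
      from fin_lb[OF fin[of i], of A] obtain m where m: "\<forall>p\<in>?P. m \<le> A p" by (elim exE)
      have "\<forall>a. Poly_Mapping.keys (opf g h i a b) \<noteq> {} \<longrightarrow> m \<le> a"
      proof (intro allI impI)
        fix a assume "Poly_Mapping.keys (opf g h i a b) \<noteq> {}"
        then have "opf g h i a b \<noteq> 0" by (simp add: keys_empty_iff)
        then have "\<exists>p. g i p a b \<noteq> 0" by (rule opf_nonzero)
        then obtain p where gp: "g i p a b \<noteq> 0" by (elim exE)
        then have "A p \<le> a" using A by simp
        moreover have "p \<in> ?P" using gp by blast
        ultimately show "m \<le> a" using m by (meson order_trans)
      qed
      then show ?thesis by (rule exI)
    qed
  qed
qed

lemma sop_opf: "sop M \<sigma> = opf (\<lambda>i p. \<sigma> (Poly_Mapping.lookup (M i) p)) (\<lambda>i p. p)"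
  unfolding sop_def opf_def ..

lemma leg12_opf: "leg12 M \<sigma> = opf (\<lambda>(a, b, c) p. \<sigma> (Poly_Mapping.lookup (M (a, b)) p)) (\<lambda>(a, b, c) (m, n). (m, n, c))"
  unfolding leg12_def opf_def by (auto simp: fun_eq_iff case_prod_beta intro!: Sum_any.cong)

lemma leg23_opf: "leg23 M \<sigma> = opf (\<lambda>(a, b, c) p. \<sigma> (Poly_Mapping.lookup (M (b, c)) p)) (\<lambda>(a, b, c) (n, t). (a, n, t))"
  unfolding leg23_def opf_def by (auto simp: fun_eq_iff case_prod_beta intro!: Sum_any.cong)

lemma leg13_opf: "leg13 M \<sigma> = opf (\<lambda>(a, b, c) p. \<sigma> (Poly_Mapping.lookup (M (a, c)) p)) (\<lambda>(a, b, c) (m, t). (m, b, t))"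
  unfolding leg13_def opf_def by (auto simp: fun_eq_iff case_prod_beta intro!: Sum_any.cong)


lemma good_const2: "good (const2 t)"
  unfolding good_def sgood_def spt_def const2_def
proof (intro conjI allI)
  show "\<exists>B. \<forall>a b. Poly_Mapping.keys (if a = 0 \<and> b = 0 then t else 0) \<noteq> {} \<longrightarrow> B \<le> (b::int)"
    by (rule exI[of _ "0::int"]) auto
  show "\<exists>A. \<forall>a. Poly_Mapping.keys (if a = 0 \<and> b = 0 then t else 0) \<noteq> {} \<longrightarrow> A \<le> (a::int)" for b
    by (rule exI[of _ "0::int"]) auto
  show "finite (\<Union>a. Poly_Mapping.keys (if a = 0 \<and> b = (0::int) then t else 0))" for b
  proof -
    have "(\<Union>a. Poly_Mapping.keys (if a = 0 \<and> b = (0::int) then t else 0)) \<subseteq> Poly_Mapping.keys t" by (auto split: if_splits)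
    then show ?thesis by (rule finite_subset) simp
  qed
qed

lemma vfin_const2: "vfin (const2 t)"
  unfolding vfin_def svfin_def spt_def const2_def
proof -
  have "(\<Union>a. \<Union>b. Poly_Mapping.keys (if a = 0 \<and> b = (0::int) then t else 0)) \<subseteq> Poly_Mapping.keys t" by (auto split: if_splits)
  then show "finite (\<Union>a. \<Union>b. Poly_Mapping.keys (if a = 0 \<and> b = (0::int) then t else 0))" by (rule finite_subset) simp
qed

lemma pop_props: "gop (pop p)" "vop (pop p)" "dpos (pop p)"
  unfolding gop_def vop_def dpos_def pop_def using good_const2 vfin_const2 by (auto simp: const2_def)

lemma Id_props: "gop Id" "vop Id" "dpos Id"
  unfolding Id_pop by (rule pop_props)+

lemma opf_props_sigma:
  assumes "\<And>f. sc_ok (\<sigma> f)" "\<sigma> 0 = (\<lambda>c d. 0)"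
  and "\<And>i. finite {p. \<exists>c d. g i p c d \<noteq> 0}"
  shows True by simp

lemma sop_props:
  assumes ok: "\<And>f. sc_ok (\<sigma> f)" and z: "\<sigma> 0 = (\<lambda>c d. 0)"
  shows "gop (sop M \<sigma>)" "vop (sop M \<sigma>)" "dpos (sop M \<sigma>)"
proof -
  have fin: "finite {p. \<exists>c d. \<sigma> (Poly_Mapping.lookup (M i) p) c d \<noteq> 0}" for i
    by (rule finite_subset[of _ "Poly_Mapping.keys (M i)"]) (auto simp: in_keys_iff z)
  show "gop (sop M \<sigma>)" "vop (sop M \<sigma>)" "dpos (sop M \<sigma>)"
    unfolding sop_opf by (rule opf_props[OF fin ok])+
qed

lemma leg12_props:
  assumes ok: "\<And>f. sc_ok (\<sigma> f)" and z: "\<sigma> 0 = (\<lambda>c d. 0)"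
  shows "gop (leg12 M \<sigma>)" "vop (leg12 M \<sigma>)" "dpos (leg12 M \<sigma>)"
proof -
  have fin: "finite {p. \<exists>c d. (case i of (a, b, c) \<Rightarrow> \<lambda>p. \<sigma> (Poly_Mapping.lookup (M (a, b)) p)) p c d \<noteq> 0}" for i
    by (cases i, rule finite_subset[of _ "Poly_Mapping.keys (M (fst i, fst (snd i)))"]) (auto simp: in_keys_iff z)
  have ok': "sc_ok ((case i of (a, b, c) \<Rightarrow> \<lambda>p. \<sigma> (Poly_Mapping.lookup (M (a, b)) p)) p)" for i p
    by (cases i) (simp add: ok)
  show "gop (leg12 M \<sigma>)" "vop (leg12 M \<sigma>)" "dpos (leg12 M \<sigma>)"
    unfolding leg12_opf by (rule opf_props[OF fin ok'])+
qed

lemma leg23_props: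
  assumes ok: "\<And>f. sc_ok (\<sigma> f)" and z: "\<sigma> 0 = (\<lambda>c d. 0)"
  shows "gop (leg23 M \<sigma>)" "vop (leg23 M \<sigma>)" "dpos (leg23 M \<sigma>)"
proof -
  have fin: "finite {p. \<exists>c d. (case i of (a, b, c) \<Rightarrow> \<lambda>p. \<sigma> (Poly_Mapping.lookup (M (b, c)) p)) p c d \<noteq> 0}" for i
    by (cases i, rule finite_subset[of _ "Poly_Mapping.keys (M (fst (snd i), snd (snd i)))"]) (auto simp: in_keys_iff z)
  have ok': "sc_ok ((case i of (a, b, c) \<Rightarrow> \<lambda>p. \<sigma> (Poly_Mapping.lookup (M (b, c)) p)) p)" for i p
    by (cases i) (simp add: ok)
  show "gop (leg23 M \<sigma>)" "vop (leg23 M \<sigma>)" "dpos (leg23 M \<sigma>)"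
    unfolding leg23_opf by (rule opf_props[OF fin ok'])+
qed

lemma leg13_props:
  assumes ok: "\<And>f. sc_ok (\<sigma> f)" and z: "\<sigma> 0 = (\<lambda>c d. 0)"
  shows "gop (leg13 M \<sigma>)" "vop (leg13 M \<sigma>)" "dpos (leg13 M \<sigma>)"
proof -
  have fin: "finite {p. \<exists>c d. (case i of (a, b, c) \<Rightarrow> \<lambda>p. \<sigma> (Poly_Mapping.lookup (M (a, c)) p)) p c d \<noteq> 0}" for i
    by (cases i, rule finite_subset[of _ "Poly_Mapping.keys (M (fst i, snd (snd i)))"]) (auto simp: in_keys_iff z)
  have ok': "sc_ok ((case i of (a, b, c) \<Rightarrow> \<lambda>p. \<sigma> (Poly_Mapping.lookup (M (a, c)) p)) p)" for i p
    by (cases i) (simp add: ok)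
  show "gop (leg13 M \<sigma>)" "vop (leg13 M \<sigma>)" "dpos (leg13 M \<sigma>)"
    unfolding leg13_opf by (rule opf_props[OF fin ok'])+
qed

lemma lookup_tens: "Poly_Mapping.lookup (tens u v) (i, j) = Poly_Mapping.lookup u i * Poly_Mapping.lookup v j"
proof -
  have fin: "finite {x. (\<lambda>(i, j). smul (Poly_Mapping.lookup u i * Poly_Mapping.lookup v j) (bv (i, j))) x \<noteq> 0}"
    by (rule finite_subset[of _ "Poly_Mapping.keys u \<times> Poly_Mapping.keys v"]) (auto simp: in_keys_iff)
  have "Poly_Mapping.lookup (tens u v) (i, j) =
     Sum_any (\<lambda>x. if x = (i, j) then Poly_Mapping.lookup u i * Poly_Mapping.lookup v j else 0)"
    unfolding tens_def SA_lookup[OF fin] by (rule Sum_any.cong) (auto simp: lookup_bv split: if_splits)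
  then show ?thesis by simp
qed

lemma tens_bv_right: "tens u (bv c) = pf (\<lambda>k. (k, c)) u"
proof (rule poly_mapping_eqI)
  fix x show "Poly_Mapping.lookup (tens u (bv c)) x = Poly_Mapping.lookup (pf (\<lambda>k. (k, c)) u) x"
  proof (cases x)
    case (Pair i j)
    have inj: "inj (\<lambda>k. (k, c))" by (simp add: inj_def)
    show ?thesis
    proof (cases "j = c")
      case True then show ?thesis using Pair by (simp add: lookup_tens lookup_bv lookup_pf[OF inj])
    next
      case False then show ?thesis using Pair lookup_pf_out[of x "\<lambda>k. (k, c)"] by (auto simp: lookup_tens lookup_bv)
    qed
  qed
qed

lemma tens_bv_left: "tens (bv a) v = pf (\<lambda>k. (a, k)) v"
proof (rule poly_mapping_eqI)
  fix x show "Poly_Mapping.lookup (tens (bv a) v) x = Poly_Mapping.lookup (pf (\<lambda>k. (a, k)) v) x"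
  proof (cases x)
    case (Pair i j)
    have inj: "inj (\<lambda>k. (a, k))" by (simp add: inj_def)
    show ?thesis
    proof (cases "i = a")
      case True then show ?thesis using Pair by (simp add: lookup_tens lookup_bv lookup_pf[OF inj])
    next
      case False then show ?thesis using Pair lookup_pf_out[of x "\<lambda>k. (a, k)"] by (auto simp: lookup_tens lookup_bv)
    qed
  qed
qed


definition trunc :: "'b vop \<Rightarrow> bool" where
  "trunc Y \<longleftrightarrow> (\<forall>u v. \<exists>N. \<forall>n\<ge>N. Y u v n = 0)"

lemma nonlocal_trunc: "nonlocal_va Y vac \<Longrightarrow> trunc Y"
  unfolding nonlocal_va_def trunc_def by blast

lemma Y12_pf: "Y12 Y = (\<lambda>(a, b, c) cc dd. if cc = 0 then pf (\<lambda>k. (k, c)) (Y (bv a) (bv b) (- dd - 1)) else 0)"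
  unfolding Y12_def by (auto simp: tens_bv_right fun_eq_iff)

lemma Y23_pf: "Y23 Y = (\<lambda>(a, b, c) cc dd. if cc = 0 then pf (\<lambda>k. (a, k)) (Y (bv b) (bv c) (- dd - 1)) else 0)"
  unfolding Y23_def by (auto simp: tens_bv_left fun_eq_iff)

lemma good_Yser:
  assumes tr: "trunc Y" and inj: "inj h"
  shows "good (\<lambda>cc dd. if cc = 0 then pf h (Y u v (- dd - 1)) else 0)"
  unfolding good_def sgood_def spt_def
proof (intro conjI allI)
  obtain N where N: "\<forall>n\<ge>N. Y u v n = 0" using tr unfolding trunc_def by blast
  show "\<exists>B. \<forall>a b. Poly_Mapping.keys (if a = 0 then pf h (Y u v (- b - 1)) else 0) \<noteq> {} \<longrightarrow> B \<le> b"
  proof (rule exI[of _ "- N"], intro allI impI)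
    fix a b assume "Poly_Mapping.keys (if a = 0 then pf h (Y u v (- b - 1)) else 0) \<noteq> {}"
    then have "Y u v (- b - 1) \<noteq> 0" by (auto simp: keys_empty_iff pf_zero_iff[OF inj] split: if_splits)
    then have "\<not> (- b - 1 \<ge> N)" using N by blast
    then show "- N \<le> b" by simp
  qed
  show "\<exists>A. \<forall>a. Poly_Mapping.keys (if a = 0 then pf h (Y u v (- b - 1)) else 0) \<noteq> {} \<longrightarrow> A \<le> (a::int)" for b
    by (rule exI[of _ 0]) (auto split: if_splits)
  show "finite (\<Union>a. Poly_Mapping.keys (if a = (0::int) then pf h (Y u v (- b - 1)) else 0))" for b
  proof -
    have "(\<Union>a. Poly_Mapping.keys (if a = (0::int) then pf h (Y u v (- b - 1)) else 0)) \<subseteq> Poly_Mapping.keys (pf h (Y u v (- b - 1)))"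
      by (auto split: if_splits)
    then show ?thesis by (rule finite_subset) simp
  qed
qed

lemma gop_Y12: "trunc Y \<Longrightarrow> gop (Y12 Y)"
  unfolding gop_def Y12_pf by (auto intro!: good_Yser simp: inj_def)

lemma gop_Y23: "trunc Y \<Longrightarrow> gop (Y23 Y)"
  unfolding gop_def Y23_pf by (auto intro!: good_Yser simp: inj_def)

definition sw :: "'a \<times> 'b \<Rightarrow> 'b \<times> 'a" where "sw = (\<lambda>(i, j). (j, i))"

lemma flip_pop: "flip = pop sw"
  unfolding flip_def pop_def sw_def by (auto simp: fun_eq_iff)

lemma inj_sw: "inj sw" by (auto simp: inj_def sw_def)

lemma app_flip: "app flip G = (\<lambda>a b. pf sw (G a b))"
  unfolding flip_pop app_pop ..

lemma flip_props: "gop flip" "vop flip" "dpos flip"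
  unfolding flip_pop by (rule pop_props)+

lemma pf_if: "pf h (if P then u else 0) = (if P then pf h u else 0)" by simp

lemma comp_flip_Y23: "comp flip (Y23 Y) = comp (Y12 Y) (pop (\<lambda>(a, b, c). (b, c, a)))"
  apply (simp only: comp_pop_right)
  by (auto simp: comp_def app_flip Y23_pf Y12_pf fun_eq_iff pf_pf inj_sw inj_def sw_def)

lemma comp_flip_Y12: "comp flip (Y12 Y) = comp (Y23 Y) (pop (\<lambda>(a, b, c). (c, a, b)))"
  apply (simp only: comp_pop_right)
  by (auto simp: comp_def app_flip Y23_pf Y12_pf fun_eq_iff pf_pf inj_sw inj_def sw_def)

lemma sop_R: "sop (comp_flip S) \<sigma> = comp (sop S \<sigma>) flip"
  unfolding flip_pop comp_pop_right sop_def comp_flip_def sw_def by (auto simp: fun_eq_iff)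

lemma leg12_R: "leg12 (comp_flip S) \<sigma> = comp (leg12 S \<sigma>) (pop (\<lambda>(a, b, c). (b, a, c)))"
  unfolding comp_pop_right leg12_def comp_flip_def by (auto simp: fun_eq_iff)

lemma leg23_R: "leg23 (comp_flip S) \<sigma> = comp (leg23 S \<sigma>) (pop (\<lambda>(a, b, c). (a, c, b)))"
  unfolding comp_pop_right leg23_def comp_flip_def by (auto simp: fun_eq_iff)


lemma comp_assoc:
  assumes "gop E''" "gop E'" "gop E" "dpos E' \<or> vop E''" "dpos E \<or> (vop E'' \<and> vop E')"
  shows "comp E (comp E' E'') = comp (comp E E') E''"
proof
  fix j
  have "app E (app E' (E'' j)) = app (comp E E') (E'' j)"
    by (rule assoc_good) (use assms in \<open>auto simp: gop_def vop_def\<close>)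
  then show "comp E (comp E' E'') j = comp (comp E E') E'' j" unfolding comp_def .
qed

lemma smul_SA: "smul c (Sum_any f) = Sum_any (\<lambda>x. smul c (f x))"
proof (cases "c = 0")
  case True then show ?thesis by simp
next
  case False
  have inj: "smul c u = smul c v \<longleftrightarrow> u = v" for u v
    using False by (auto intro!: poly_mapping_eqI dest: arg_cong[of _ _ "\<lambda>w. Poly_Mapping.lookup w k" for k])
  show ?thesis
  proof (cases "finite {x. f x \<noteq> 0}")
    case True
    have eq: "{x. smul c (f x) \<noteq> 0} = {x. f x \<noteq> 0}" using inj[of _ 0] by auto
    have fin2: "finite {x. smul c (f x) \<noteq> 0}" using True eq by simp
    show ?thesis
      by (rule poly_mapping_eqI) (simp add: SA_lookup[OF True] SA_lookup[OF fin2] SA_mult_right)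
  next
    case nf: False
    have eq: "{x. smul c (f x) \<noteq> 0} = {x. f x \<noteq> 0}" using inj[of _ 0] by auto
    then have "infinite {x. smul c (f x) \<noteq> 0}" using nf by simp
    with nf show ?thesis by simp
  qed
qed

lemma smul_smul: "smul a (smul b v) = smul (a * b) v"
  by (rule poly_mapping_eqI) (simp add: mult.assoc)

lemma pf_bv: "pf h (bv i) = bv (h i)"
proof -
  have "Sum_any (\<lambda>j. smul (Poly_Mapping.lookup (bv i) j) (bv (h j))) = Sum_any (\<lambda>j. if j = i then bv (h j) else 0)"
    by (rule Sum_any.cong) (simp add: lookup_bv)
  then show ?thesis unfolding pf_def by simp
qed

lemma pf_opf: "inj h \<Longrightarrow> pf h (opf g h' i c d) = opf g (\<lambda>i p. h (h' i p)) i c d"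
  unfolding opf_def by (simp add: pf_SA pf_smul pf_bv)

lemma app_const2_const2: "app E (const2 t) = app E (const2 t)" ..

lemma app_pop_const2: "app (pop p) (const2 t) = const2 (pf p t)"
  unfolding app_pop const2_def by (auto simp: fun_eq_iff)

lemma Sn_Sx: "sop S sub_negx i c d = smul ((-1) ^ nat \<bar>c\<bar>) (sop S sub_x i c d)"
  unfolding sop_def smul_SA by (rule Sum_any.cong) (simp add: smul_smul sub_negx_def sub_x_def)

lemma app_Sn_const: "app (sop S sub_negx) (const2 t) = negvar (app (sop S sub_x) (const2 t))"
  unfolding negvar_def by (auto simp: fun_eq_iff app_const Sn_Sx smul_SA smul_smul mult.commute)

lemma negvar_const2: "negvar (const2 t) = const2 t"
  unfolding negvar_def const2_def by (auto simp: fun_eq_iff)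

lemma pf_sw_tens:
  fixes u :: "'a vec" and v :: "'b vec"
  shows "pf sw (tens u v) = tens v u"
proof (rule poly_mapping_eqI)
  fix x :: "'b \<times> 'a"
  obtain i j where x: "x = (i, j)" by (cases x)
  have "x = sw (j, i)" unfolding x sw_def by simp
  then have "Poly_Mapping.lookup (pf sw (tens u v)) x = Poly_Mapping.lookup (tens u v) (j, i)"
    using lookup_pf[OF inj_sw] by simp
  then show "Poly_Mapping.lookup (pf sw (tens u v)) x = Poly_Mapping.lookup (tens v u) x"
    by (simp add: lookup_tens x)
qed

lemma app_flip_const2: "app flip (const2 t) = const2 (pf sw t)"
  unfolding flip_pop app_pop_const2 ..

lemma Sx_props: "gop (sop S sub_x)" "vop (sop S sub_x)" "dpos (sop S sub_x)"
  by (rule sop_props[OF sc_ok_sub_x]; simp)+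

lemma Sn_props: "gop (sop S sub_negx)" "vop (sop S sub_negx)" "dpos (sop S sub_negx)"
  by (rule sop_props[OF sc_ok_sub_negx]; simp)+

lemma Sp_props: "gop (sop S (sub_plus s))" "vop (sop S (sub_plus s))" "dpos (sop S (sub_plus s))"
  by (rule sop_props[OF sc_ok_sub_plus]; simp)+

lemma app_comp_const:
  assumes "gop E'" "gop E" "dpos E \<or> vop E'"
  shows "app (comp E E') (const2 t) = app E (app E' (const2 t))"
  by (rule assoc_good[symmetric]) (use assms good_const2 vfin_const2 in auto)

lemma cond1:
  assumes vacS: "\<forall>v. app (sop S sub_x) (const2 (tens vac v)) = const2 (tens vac v)"
  shows "app (sop (comp_flip S) sub_x) (const2 (tens v vac)) = const2 (tens vac v)"
  unfolding sop_R
  by (subst app_comp_const) (use flip_props Sx_props vacS in \<open>auto simp: app_flip_const2 pf_sw_tens\<close>)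

lemma cond2:
  assumes vacS: "\<forall>v. app (sop S sub_x) (const2 (tens vac v)) = const2 (tens vac v)"
    and un: "unitary S"
  shows "app (sop (comp_flip S) sub_x) (const2 (tens vac u)) = const2 (tens u vac)"
proof -
  have "app (sop (comp_flip S) sub_x) (const2 (tens vac u)) = app (sop S sub_x) (const2 (tens u vac))"
    unfolding sop_R
    by (subst app_comp_const) (use flip_props Sx_props in \<open>auto simp: app_flip_const2 pf_sw_tens\<close>)
  also have "\<dots> = const2 (tens u vac)"
  proof -
    have "app (sop S sub_negx) (const2 (tens vac u)) = const2 (tens vac u)"
      unfolding app_Sn_const using vacS negvar_const2 by simp
    then show ?thesis using un[unfolded unitary_def, rule_format, of "tens u vac"]
      by (simp add: app_flip_const2 pf_sw_tens)
  qed
  finally show ?thesis .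
qed


lemma leg_props_x:
  "gop (leg12 S sub_x)" "vop (leg12 S sub_x)" "dpos (leg12 S sub_x)"
  "gop (leg23 S sub_x)" "vop (leg23 S sub_x)" "dpos (leg23 S sub_x)"
  "gop (leg13 S sub_x)" "vop (leg13 S sub_x)" "dpos (leg13 S sub_x)"
  "gop (leg12 S sub_negx)" "vop (leg12 S sub_negx)" "dpos (leg12 S sub_negx)"
  "gop (leg23 S sub_negx)" "vop (leg23 S sub_negx)" "dpos (leg23 S sub_negx)"
  "gop (leg13 S sub_negx)" "vop (leg13 S sub_negx)" "dpos (leg13 S sub_negx)"
  "gop (leg12 S (sub_plus s))" "vop (leg12 S (sub_plus s))" "dpos (leg12 S (sub_plus s))"
  "gop (leg23 S (sub_plus s))" "vop (leg23 S (sub_plus s))" "dpos (leg23 S (sub_plus s))"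
  "gop (leg13 S (sub_plus s))" "vop (leg13 S (sub_plus s))" "dpos (leg13 S (sub_plus s))"
  by (rule leg12_props leg23_props leg13_props; (rule sc_ok_sub_x sc_ok_sub_negx sc_ok_sub_plus | simp))+

lemmas props = leg_props_x Sx_props Sn_props Sp_props flip_props pop_props Id_props good_const2 vfin_const2

lemma cond3:
  assumes tr: "trunc Y"
    and hex: "\<forall>t. app (sop S sub_x) (app (Y12 Y) (const2 t)) =
       app (Y12 Y) (app (leg23 S sub_x) (app (leg13 S (sub_plus 1)) (const2 t)))"
  shows "app (sop (comp_flip S) sub_x) (app (Y23 Y) (const2 t)) =
     app (Y12 Y) (app (leg23 (comp_flip S) sub_x) (app (leg12 (comp_flip S) (sub_plus 1)) (const2 t)))"
proof -
  let ?Sx = "sop S sub_x" and ?L23 = "leg23 S sub_x" and ?L13 = "leg13 S (sub_plus 1)"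
    and ?L12 = "leg12 S (sub_plus 1)" and ?c = "const2 t"
  let ?Q = "\<lambda>(a::'a, b::'a, c::'a). (b, c, a)" and ?P12 = "\<lambda>(a::'a, b::'a, c::'a). (b, a, c)"
    and ?P23 = "\<lambda>(a::'a, b::'a, c::'a). (a, c, b)"
  have gY12: "gop (Y12 Y)" and gY23: "gop (Y23 Y)" using tr by (rule gop_Y12, rule gop_Y23)
  have opid: "comp (pop ?P23) (comp ?L12 (pop ?P12)) = comp ?L13 (pop ?Q)"
    unfolding comp_pop_right
    by (simp add: comp_def app_pop leg12_opf leg13_opf pf_opf inj_def fun_eq_iff split: prod.splits)
       (simp add: opf_def case_prod_beta)
  have gc: "good (app (Y23 Y) ?c)" by (rule good_app) (use gY23 in \<open>auto simp: props\<close>)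
  have "app (comp ?Sx flip) (app (Y23 Y) ?c) = app ?Sx (app flip (app (Y23 Y) ?c))"
    by (rule assoc_good[symmetric]) (use gc in \<open>auto simp: props\<close>)
  also have "app flip (app (Y23 Y) ?c) = app (comp flip (Y23 Y)) ?c"
    by (rule assoc_good) (use gY23 in \<open>auto simp: props\<close>)
  also have "\<dots> = app (comp (Y12 Y) (pop ?Q)) ?c" by (simp add: comp_flip_Y23)
  also have "\<dots> = app (Y12 Y) (const2 (pf ?Q t))"
    by (subst app_comp_const) (use gY12 in \<open>auto simp: app_pop_const2 props\<close>)
  finally have L: "app (comp ?Sx flip) (app (Y23 Y) ?c) = app (Y12 Y) (app ?L23 (app ?L13 (const2 (pf ?Q t))))"
    using hex by simp
  have X2: "app ?L23 (app ?L13 (const2 (pf ?Q t))) = app (comp ?L23 (comp ?L13 (pop ?Q))) ?c"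
  proof -
    have "app ?L13 (const2 (pf ?Q t)) = app (comp ?L13 (pop ?Q)) ?c"
      by (subst app_comp_const) (auto simp: app_pop_const2 props)
    then show ?thesis
      by (simp, subst app_comp_const) (auto intro!: gop_comp simp: props)
  qed
  have X1: "app (comp ?L23 (pop ?P23)) (app (comp ?L12 (pop ?P12)) ?c) =
     app (comp ?L23 (comp (pop ?P23) (comp ?L12 (pop ?P12)))) ?c"
  proof -
    have "app (comp ?L23 (pop ?P23)) (app (comp ?L12 (pop ?P12)) ?c) =
      app (comp (comp ?L23 (pop ?P23)) (comp ?L12 (pop ?P12))) ?c"
      by (rule assoc_good) (auto intro!: gop_comp dpos_comp simp: props)
    also have "comp (comp ?L23 (pop ?P23)) (comp ?L12 (pop ?P12)) = comp ?L23 (comp (pop ?P23) (comp ?L12 (pop ?P12)))"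
      by (rule comp_assoc[symmetric]) (auto intro!: gop_comp vop_comp simp: props)
    finally show ?thesis .
  qed
  show ?thesis
    unfolding sop_R leg12_R leg23_R L X1 X2 opid ..
qed


lemma m1_powi: "((-1::complex) powi n) = (-1) ^ nat \<bar>n\<bar>"
proof (cases "n \<ge> 0")
  case True then show ?thesis by (simp add: power_int_def)
next
  case False
  then have "n = - int (nat (-n))" by simp
  then have "(-1::complex) powi n = (-1) powi (- int (nat (-n)))" by simp
  also have "\<dots> = (-1) powi (int (nat (-n)))" by (rule power_int_minus_one_minus)
  also have "\<dots> = (-1) ^ nat (-n)" by (simp add: power_int_def)
  finally show ?thesis using False by simp
qed

lemma m1_add: "((-1::complex) ^ nat \<bar>x + y\<bar>) = (-1) ^ nat \<bar>x\<bar> * (-1) ^ nat \<bar>y\<bar>"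
  unfolding m1_powi[symmetric] by (simp add: power_int_add)

lemma fls_mult_SA: "fls_nth ((f::complex fls) * g) n = Sum_any (\<lambda>i. fls_nth f i * fls_nth g (n - i))"
proof -
  have "Sum_any (\<lambda>i. fls_nth f i * fls_nth g (n - i)) =
        sum (\<lambda>i. fls_nth f i * fls_nth g (n - i)) {fls_subdegree f..n - fls_subdegree g}"
  proof (rule Sum_any.expand_superset)
    show "{i. fls_nth f i * fls_nth g (n - i) \<noteq> 0} \<subseteq> {fls_subdegree f..n - fls_subdegree g}"
    proof (safe)
      fix x assume "fls_nth f x * fls_nth g (n - x) \<noteq> 0"
      then have "fls_nth f x \<noteq> 0" "fls_nth g (n - x) \<noteq> 0" by auto
      then have "fls_subdegree f \<le> x" "fls_subdegree g \<le> n - x" by (auto dest: fls_nth_nz)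
      then show "x \<in> {fls_subdegree f..n - fls_subdegree g}" by simp
    qed
  qed simp
  then show ?thesis by (simp add: fls_times_nth(2))
qed

definition fneg :: "complex fls \<Rightarrow> complex fls" where
  "fneg F = fls_compose_fps F (fps_const (-1) * fps_X)"

lemma fneg_nth: "fls_nth (fneg F) n = (-1) ^ nat \<bar>n\<bar> * fls_nth F n"
  unfolding fneg_def by (simp add: fls_nth_fls_compose_fps_linear m1_powi)

lemma fneg_mult: "fneg (F * G) = fneg F * fneg G"
  unfolding fneg_def by (rule fls_compose_fps_mult) (auto simp: fps_eq_iff)

lemma fneg_add: "fneg (F + G) = fneg F + fneg G"
  unfolding fneg_def by (rule fls_compose_fps_add) (auto simp: fps_eq_iff)

lemma fneg_0[simp]: "fneg 0 = 0" and fneg_1[simp]: "fneg 1 = 1"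
  unfolding fneg_def by simp_all

lemma fneg_fneg[simp]: "fneg (fneg F) = F"
  by (rule fls_eqI) (simp add: fneg_nth power_mult_distrib[symmetric])

lemma fneg_sum: "fneg (sum f A) = sum (\<lambda>x. fneg (f x)) A"
  by (induction A rule: infinite_finite_induct) (auto simp: fneg_add)

lemma sub_x_plus0: "sub_x f = sub_plus 0 f"
  unfolding sub_x_def sub_plus_def by (auto simp: fun_eq_iff)

lemma sub_negx_plus0: "sub_negx f = sub_plus 0 (fneg f)"
  unfolding sub_negx_def sub_plus_def by (auto simp: fun_eq_iff fneg_nth)


lemma int_interval_image: "0 \<le> b \<Longrightarrow> {0..b} = int ` {0..nat b}"
proof (rule set_eqI, rule iffI)
  fix x assume "0 \<le> b" "x \<in> {0..b}"
  then show "x \<in> int ` {0..nat b}" by (intro image_eqI[of _ _ "nat x"]) auto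
qed auto

lemma sub_plus_nz: "sub_plus s f c d \<noteq> 0 \<Longrightarrow> 0 \<le> d \<and> fls_subdegree f \<le> c + d"
  unfolding sub_plus_def by (auto split: if_splits dest!: fls_nth_nz)

lemma vandermonde_int:
  "(\<Sum>k\<in>{0..n}. ((A::complex) gchoose (n - k)) * (E gchoose k)) = (E + A) gchoose n"
  using gbinomial_Vandermonde[of E A n] by (simp add: mult.commute)

lemma sub_plus_conv:
  "Sum_any (\<lambda>(c, d). sub_plus s f (a - c) (b - d) * sub_plus s g c d) = sub_plus s (f * g) a b"
proof (cases "0 \<le> b")
  case False
  have "(\<lambda>(c, d). sub_plus s f (a - c) (b - d) * sub_plus s g c d) = (\<lambda>_. 0)"
  proof (intro ext, clarify)
    fix c d
    show "sub_plus s f (a - c) (b - d) * sub_plus s g c d = 0"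
    proof (rule ccontr)
      assume "sub_plus s f (a - c) (b - d) * sub_plus s g c d \<noteq> 0"
      then have h1: "sub_plus s f (a - c) (b - d) \<noteq> 0" and h2: "sub_plus s g c d \<noteq> 0" by auto
      have "0 \<le> b - d" using sub_plus_nz[OF h1] by simp
      moreover have "0 \<le> d" using sub_plus_nz[OF h2] by simp
      ultimately show False using False by simp
    qed
  qed
  then show ?thesis using False by (simp add: sub_plus_def)
next
  case True
  define lo where "lo = fls_subdegree g"
  define hi where "hi = a + b - fls_subdegree f"
  define W where "W = (\<lambda>e d. sub_plus s f (a - (e - d)) (b - d) * sub_plus s g (e - d) d)"
  have step1: "Sum_any (\<lambda>(c, d). sub_plus s f (a - c) (b - d) * sub_plus s g c d) = Sum_any (\<lambda>(e, d). W e d)"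
  proof (rule Sum_any.reindex_cong[symmetric])
    show "bij (\<lambda>(c::int, d::int). (c + d, d))"
      by (rule o_bij[where g = "\<lambda>(e, d). (e - d, d)"]) (auto simp: fun_eq_iff)
    show "(\<lambda>(e, d). W e d) \<circ> (\<lambda>(c, d). (c + d, d)) = (\<lambda>(c, d). sub_plus s f (a - c) (b - d) * sub_plus s g c d)"
      by (auto simp: W_def fun_eq_iff)
  qed
  have suppW: "W e d \<noteq> 0 \<Longrightarrow> (e, d) \<in> {lo..hi} \<times> {0..b}" for e d
  proof -
    assume "W e d \<noteq> 0"
    then have h: "sub_plus s f (a - (e - d)) (b - d) \<noteq> 0" "sub_plus s g (e - d) d \<noteq> 0" by (auto simp: W_def)
    from sub_plus_nz[OF h(1)] sub_plus_nz[OF h(2)] show ?thesis by (auto simp: lo_def hi_def)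
  qed
  have step2: "Sum_any (\<lambda>(e, d). W e d) = (\<Sum>e\<in>{lo..hi}. \<Sum>d\<in>{0..b}. W e d)"
  proof -
    have "Sum_any (\<lambda>(e, d). W e d) = sum (\<lambda>(e, d). W e d) ({lo..hi} \<times> {0..b})"
      by (rule Sum_any.expand_superset) (use suppW in auto)
    then show ?thesis by (simp add: sum.cartesian_product)
  qed
  have step3: "(\<Sum>d\<in>{0..b}. W e d) = s ^ nat b * ((of_int (a + b) :: complex) gchoose nat b) * (fls_nth f (a + b - e) * fls_nth g e)" for e
  proof -
    have "(\<Sum>d\<in>{0..b}. W e d) = (\<Sum>k\<in>{0..nat b}. W e (int k))"
      unfolding int_interval_image[OF True] by (simp add: sum.reindex)
    also have "\<dots> = (\<Sum>k\<in>{0..nat b}. s ^ nat b * (((of_int (a + b - e) :: complex) gchoose (nat b - k)) * (of_int e gchoose k)) *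
        (fls_nth f (a + b - e) * fls_nth g e))"
    proof (rule sum.cong[OF refl])
      fix k assume k: "k \<in> {0..nat b}"
      then have e1: "nat (b - int k) = nat b - k" and e2: "a - (e - int k) + (b - int k) = a + b - e" by auto
      have pw: "s ^ (nat b - k) * s ^ k = s ^ nat b" using k by (simp add: power_add[symmetric])
      have "W e (int k) = (s ^ (nat b - k) * s ^ k) * (((of_int (a + b - e) :: complex) gchoose (nat b - k)) * (of_int e gchoose k)) *
        (fls_nth f (a + b - e) * fls_nth g e)"
        using k True unfolding W_def sub_plus_def e1 e2 by (simp add: algebra_simps)
      then show "W e (int k) = s ^ nat b * (((of_int (a + b - e) :: complex) gchoose (nat b - k)) * (of_int e gchoose k)) *
        (fls_nth f (a + b - e) * fls_nth g e)" unfolding pw .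
    qed
    also have "\<dots> = s ^ nat b * (\<Sum>k\<in>{0..nat b}. ((of_int (a + b - e) :: complex) gchoose (nat b - k)) * (of_int e gchoose k)) *
        (fls_nth f (a + b - e) * fls_nth g e)"
      by (simp add: sum_distrib_left sum_distrib_right)
    also have "(\<Sum>k\<in>{0..nat b}. ((of_int (a + b - e) :: complex) gchoose (nat b - k)) * (of_int e gchoose k)) =
        (of_int e + of_int (a + b - e)) gchoose nat b"
      by (rule vandermonde_int)
    also have "(of_int e + of_int (a + b - e) :: complex) = of_int (a + b)" by simp
    finally show ?thesis .
  qed
  have step4: "(\<Sum>e\<in>{lo..hi}. fls_nth f (a + b - e) * fls_nth g e) = fls_nth (f * g) (a + b)"
  proof -
    have "fls_nth (f * g) (a + b) = fls_nth (g * f) (a + b)" by (simp add: mult.commute)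
    also have "\<dots> = Sum_any (\<lambda>e. fls_nth g e * fls_nth f (a + b - e))" by (rule fls_mult_SA)
    also have "\<dots> = (\<Sum>e\<in>{lo..hi}. fls_nth g e * fls_nth f (a + b - e))"
    proof (rule Sum_any.expand_superset)
      show "{e. fls_nth g e * fls_nth f (a + b - e) \<noteq> 0} \<subseteq> {lo..hi}"
      proof
        fix e assume "e \<in> {e. fls_nth g e * fls_nth f (a + b - e) \<noteq> 0}"
        then have "fls_nth g e \<noteq> 0" "fls_nth f (a + b - e) \<noteq> 0" by auto
        then show "e \<in> {lo..hi}" using fls_nth_nz unfolding lo_def hi_def by fastforce
      qed
    qed simp
    finally show ?thesis by (simp add: mult.commute)
  qed
  show ?thesis
    unfolding step1 step2 step3 using step4 True
    by (simp add: sum_distrib_left[symmetric] sub_plus_def)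
qed


type_synonym 'i fvec = "'i \<Rightarrow>\<^sub>0 complex fls"

lemma lookup_map_mult: "Poly_Mapping.lookup (Poly_Mapping.map (\<lambda>f. (c::complex fls) * f) v) q = c * Poly_Mapping.lookup v q"
  by (simp add: Poly_Mapping.map.rep_eq when_def)

lemma map_zero_fun[simp]: "Poly_Mapping.map (\<lambda>f. 0) v = 0"
  by (rule poly_mapping_eqI) (simp add: Poly_Mapping.map.rep_eq when_def)

lemma el_lookup:
  "Poly_Mapping.lookup (ext_lin M T) q = Sum_any (\<lambda>i. Poly_Mapping.lookup T i * Poly_Mapping.lookup (M i) q)"
proof -
  have fin: "finite {i. Poly_Mapping.map (\<lambda>f. Poly_Mapping.lookup T i * f) (M i) \<noteq> 0}"
    by (rule finite_subset[of _ "Poly_Mapping.keys T"]) (auto simp: in_keys_iff)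
  show ?thesis unfolding ext_lin_def SA_lookup[OF fin] lookup_map_mult ..
qed

lemma el_single: "ext_lin M (Poly_Mapping.single i 1) = M i"
proof (rule poly_mapping_eqI)
  fix q
  have "Sum_any (\<lambda>j. Poly_Mapping.lookup (Poly_Mapping.single i 1) j * Poly_Mapping.lookup (M j) q) =
     Sum_any (\<lambda>j. if j = i then Poly_Mapping.lookup (M j) q else 0)"
    by (rule Sum_any.cong) (simp add: lookup_single when_def)
  then show "Poly_Mapping.lookup (ext_lin M (Poly_Mapping.single i 1)) q = Poly_Mapping.lookup (M i) q"
    by (simp add: el_lookup)
qed

lemma el_Im: "ext_lin (\<lambda>i. Poly_Mapping.single i 1) T = T"
proof (rule poly_mapping_eqI)
  fix q
  have "Sum_any (\<lambda>j. Poly_Mapping.lookup T j * Poly_Mapping.lookup (Poly_Mapping.single j 1) q) =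
     Sum_any (\<lambda>j. if j = q then Poly_Mapping.lookup T j else 0)"
    by (rule Sum_any.cong) (simp add: lookup_single when_def)
  then show "Poly_Mapping.lookup (ext_lin (\<lambda>i. Poly_Mapping.single i 1) T) q = Poly_Mapping.lookup T q"
    by (simp add: el_lookup)
qed

lemma el_comp: "ext_lin M (ext_lin N T) = ext_lin (\<lambda>i. ext_lin M (N i)) T"
proof (rule poly_mapping_eqI)
  fix q
  let ?g = "\<lambda>k i. Poly_Mapping.lookup T i * Poly_Mapping.lookup (N i) k * Poly_Mapping.lookup (M k) q"
  have lhs: "Poly_Mapping.lookup (ext_lin M (ext_lin N T)) q = Sum_any (\<lambda>k. Sum_any (\<lambda>i. ?g k i))"
    unfolding el_lookup by (simp add: SA_mult_left)
  have rhs: "Poly_Mapping.lookup (ext_lin (\<lambda>i. ext_lin M (N i)) T) q = Sum_any (\<lambda>i. Sum_any (\<lambda>k. ?g k i))"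
    unfolding el_lookup by (simp add: SA_mult_right mult.assoc)
  let ?C = "(\<Union>i\<in>Poly_Mapping.keys T. Poly_Mapping.keys (N i)) \<times> Poly_Mapping.keys T"
  have "Sum_any (\<lambda>k. Sum_any (\<lambda>i. ?g k i)) = Sum_any (\<lambda>i. Sum_any (\<lambda>k. ?g k i))"
  proof (rule Sum_any.swap[of ?C])
    show "finite ?C" by simp
    show "{k. \<exists>i. ?g k i \<noteq> 0} \<times> {i. \<exists>k. ?g k i \<noteq> 0} \<subseteq> ?C"
    proof (rule subsetI)
      fix x assume "x \<in> {k. \<exists>i. ?g k i \<noteq> 0} \<times> {i. \<exists>k. ?g k i \<noteq> 0}"
      then obtain k i i' k' where x: "x = (k, i')" and h1: "?g k i \<noteq> 0" and h2: "?g k' i' \<noteq> 0"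
        by (cases x) auto
      from h1 have "i \<in> Poly_Mapping.keys T" "k \<in> Poly_Mapping.keys (N i)" by (auto simp: in_keys_iff)
      moreover from h2 have "i' \<in> Poly_Mapping.keys T" by (auto simp: in_keys_iff)
      ultimately show "x \<in> ?C" unfolding x by blast
    qed
  qed
  then show "Poly_Mapping.lookup (ext_lin M (ext_lin N T)) q = Poly_Mapping.lookup (ext_lin (\<lambda>i. ext_lin M (N i)) T) q"
    unfolding lhs rhs .
qed

definition mcomp :: "('j \<Rightarrow> 'k fvec) \<Rightarrow> ('i \<Rightarrow> 'j fvec) \<Rightarrow> 'i \<Rightarrow> 'k fvec" where
  "mcomp M N = (\<lambda>i. ext_lin M (N i))"

lemma mcomp_assoc: "mcomp M (mcomp N P) = mcomp (mcomp M N) P"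
  unfolding mcomp_def by (simp add: el_comp)

definition Imat :: "'i \<Rightarrow> 'i fvec" where "Imat = (\<lambda>i. Poly_Mapping.single i 1)"

lemma mcomp_Im[simp]: "mcomp M Imat = M" "mcomp Imat M = M"
  unfolding mcomp_def Imat_def by (simp_all add: el_single el_Im fun_eq_iff)

lemma el_mcomp: "ext_lin (mcomp M N) T = ext_lin M (ext_lin N T)"
  unfolding mcomp_def by (simp add: el_comp)

lemma el_Im'[simp]: "ext_lin Imat T = T" unfolding Imat_def by (rule el_Im)

definition nv :: "'i fvec \<Rightarrow> 'i fvec" where "nv v = Poly_Mapping.map fneg v"

lemma lookup_nv: "Poly_Mapping.lookup (nv v) q = fneg (Poly_Mapping.lookup v q)"
  unfolding nv_def by (simp add: Poly_Mapping.map.rep_eq when_def)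

definition nm :: "('i \<Rightarrow> 'j fvec) \<Rightarrow> 'i \<Rightarrow> 'j fvec" where "nm M = (\<lambda>i. nv (M i))"

lemma fneg_SA: "finite {x. f x \<noteq> 0} \<Longrightarrow> fneg (Sum_any f) = Sum_any (\<lambda>x. fneg (f x))"
proof -
  assume fin: "finite {x. f x \<noteq> 0}"
  have fin2: "{x. fneg (f x) \<noteq> 0} \<subseteq> {x. f x \<noteq> 0}" by auto
  have "fneg (Sum_any f) = fneg (sum f {x. f x \<noteq> 0})" by (simp add: Sum_any.expand_set)
  also have "\<dots> = sum (\<lambda>x. fneg (f x)) {x. f x \<noteq> 0}" by (rule fneg_sum)
  also have "\<dots> = Sum_any (\<lambda>x. fneg (f x))"
    by (rule Sum_any.expand_superset[symmetric]) (use fin fin2 in auto)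
  finally show ?thesis .
qed

lemma nv_el: "nv (ext_lin M T) = ext_lin (nm M) (nv T)"
proof (rule poly_mapping_eqI)
  fix q
  have fin: "finite {i. Poly_Mapping.lookup T i * Poly_Mapping.lookup (M i) q \<noteq> 0}"
    by (rule finite_subset[of _ "Poly_Mapping.keys T"]) (auto simp: in_keys_iff)
  show "Poly_Mapping.lookup (nv (ext_lin M T)) q = Poly_Mapping.lookup (ext_lin (nm M) (nv T)) q"
    unfolding lookup_nv el_lookup fneg_SA[OF fin] nm_def by (simp add: fneg_mult lookup_nv)
qed

lemma nv_single: "nv (Poly_Mapping.single i 1) = Poly_Mapping.single i 1"
  by (rule poly_mapping_eqI) (simp add: lookup_nv lookup_single when_def)

lemma nm_mcomp: "nm (mcomp M N) = mcomp (nm M) (nm N)"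
  unfolding mcomp_def by (simp add: nv_el fun_eq_iff nm_def)

lemma nm_Im[simp]: "nm Imat = Imat" unfolding nm_def Imat_def by (simp add: nv_single)

lemma nv_nv[simp]: "nv (nv v) = v" by (rule poly_mapping_eqI) (simp add: lookup_nv)
lemma nm_nm[simp]: "nm (nm M) = M" unfolding nm_def by simp


definition sp :: "complex \<Rightarrow> 'i fvec \<Rightarrow> 'i ser2" where
  "sp s T = (\<lambda>a b. Sum_any (\<lambda>i. smul (sub_plus s (Poly_Mapping.lookup T i) a b) (bv i)))"

lemma sp_sop: "sp s T = sop (\<lambda>_::unit. T) (sub_plus s) ()"
  unfolding sp_def sop_def ..

lemma sop_sp: "sop M (sub_plus s) = (\<lambda>i. sp s (M i))"
  unfolding sp_def sop_def ..

lemma lookup_sp: "Poly_Mapping.lookup (sp s T a b) q = sub_plus s (Poly_Mapping.lookup T q) a b"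
proof -
  have fin: "finite {i. smul (sub_plus s (Poly_Mapping.lookup T i) a b) (bv i) \<noteq> 0}"
    by (rule finite_subset[of _ "Poly_Mapping.keys T"]) (auto simp: in_keys_iff)
  have "Sum_any (\<lambda>i. sub_plus s (Poly_Mapping.lookup T i) a b * Poly_Mapping.lookup (bv i) q) =
      Sum_any (\<lambda>i. if i = q then sub_plus s (Poly_Mapping.lookup T i) a b else 0)"
    by (rule Sum_any.cong) (simp add: lookup_bv)
  then show ?thesis unfolding sp_def SA_lookup[OF fin] by simp
qed

lemma good_sp: "good (sp s T)" and vfin_sp: "vfin (sp s T)"
  unfolding sp_sop using Sp_props[of "\<lambda>_::unit. T" s] by (auto simp: gop_def vop_def)

lemma sub_plus_at0: "sub_plus s f a 0 = fls_nth f a"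
  unfolding sub_plus_def by simp

lemma sp_inj: "sp s T = sp s T' \<Longrightarrow> T = T'"
proof (rule poly_mapping_eqI)
  fix q assume "sp s T = sp s T'"
  then have "Poly_Mapping.lookup (sp s T a 0) q = Poly_Mapping.lookup (sp s T' a 0) q" for a by simp
  then have "fls_nth (Poly_Mapping.lookup T q) a = fls_nth (Poly_Mapping.lookup T' q) a" for a
    by (simp add: lookup_sp sub_plus_at0)
  then show "Poly_Mapping.lookup T q = Poly_Mapping.lookup T' q" by (rule fls_eqI)
qed

lemma sub_plus_one: "sub_plus s 1 a b = (if a = 0 \<and> b = 0 then 1 else 0)"
proof (cases "0 \<le> b \<and> a + b = 0")
  case True
  then have "(of_int (a + b) :: complex) = 0" by simp
  then have "sub_plus s 1 a b = s ^ nat b * (0 gchoose nat b)"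
    using True unfolding sub_plus_def by (simp add: fls_one_nth)
  also have "\<dots> = (if a = 0 \<and> b = 0 then 1 else 0)"
    using True by (auto simp: gbinomial_0_left)
  finally show ?thesis .
next
  case False
  then show ?thesis unfolding sub_plus_def by (auto simp: fls_one_nth)
qed

lemma sp_single: "sp s (Poly_Mapping.single i 1) = const2 (bv i)"
proof (intro ext poly_mapping_eqI)
  fix a b q
  show "Poly_Mapping.lookup (sp s (Poly_Mapping.single i 1) a b) q = Poly_Mapping.lookup (const2 (bv i) a b) q"
    by (simp add: lookup_sp lookup_single when_def sub_plus_one const2_def lookup_bv)
qed

lemma fls_nth_SA: "finite {x. f x \<noteq> 0} \<Longrightarrow> fls_nth (Sum_any f) n = Sum_any (\<lambda>x. fls_nth (f x) n)"
proof -
  assume fin: "finite {x. f x \<noteq> 0}"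
  have "fls_nth (Sum_any f) n = sum (\<lambda>x. fls_nth (f x) n) {x. f x \<noteq> 0}"
    by (simp add: Sum_any.expand_set fls_nth_sum)
  also have "\<dots> = Sum_any (\<lambda>x. fls_nth (f x) n)"
    by (rule Sum_any.expand_superset[symmetric]) (use fin in auto)
  finally show ?thesis .
qed

lemma sub_plus_SA: "finite {x. f x \<noteq> 0} \<Longrightarrow> sub_plus s (Sum_any f) a b = Sum_any (\<lambda>x. sub_plus s (f x) a b)"
  unfolding sub_plus_def by (simp add: fls_nth_SA SA_mult_right)

lemma XL: "app (sop M (sub_plus s)) (sp s T) = sp s (ext_lin M T)"
proof (intro ext poly_mapping_eqI)
  fix a b q
  have fa: "fin_app (sop M (sub_plus s)) (sp s T)"
    by (rule fin_app_good) (auto simp: good_sp Sp_props)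
  define X where "X = (\<lambda>i c d. sub_plus s (Poly_Mapping.lookup T i) (a - c) (b - d) * sub_plus s (Poly_Mapping.lookup (M i) q) c d)"
  have L1: "Poly_Mapping.lookup (app (sop M (sub_plus s)) (sp s T) a b) q = Sum_any (\<lambda>(i, c, d). X i c d)"
    by (simp only: app_lookup[OF fa]) (simp add: X_def sop_sp lookup_sp)
  have finX: "finite {p. (\<lambda>i cd. case cd of (c, d) \<Rightarrow> X i c d) (fst p) (snd p) \<noteq> 0}"
  proof -
    have "finite {(i, c, d). Poly_Mapping.lookup (sp s T (a - c) (b - d)) i \<noteq> 0 \<and> sop M (sub_plus s) i c d \<noteq> 0}"
      using fa unfolding fin_app_def by blast
    moreover have "{p. (\<lambda>i cd. case cd of (c, d) \<Rightarrow> X i c d) (fst p) (snd p) \<noteq> 0} \<subseteq>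
       {(i, c, d). Poly_Mapping.lookup (sp s T (a - c) (b - d)) i \<noteq> 0 \<and> sop M (sub_plus s) i c d \<noteq> 0}"
    proof (rule subsetI)
      fix p assume "p \<in> {p. (\<lambda>i cd. case cd of (c, d) \<Rightarrow> X i c d) (fst p) (snd p) \<noteq> 0}"
      then obtain i c d where p: "p = (i, c, d)" and nz: "X i c d \<noteq> 0" by (cases p) auto
      then have h1: "sub_plus s (Poly_Mapping.lookup T i) (a - c) (b - d) \<noteq> 0"
        and h2: "sub_plus s (Poly_Mapping.lookup (M i) q) c d \<noteq> 0" by (auto simp: X_def)
      have "Poly_Mapping.lookup (sp s T (a - c) (b - d)) i \<noteq> 0" using h1 by (simp add: lookup_sp)
      moreover have "sop M (sub_plus s) i c d \<noteq> 0"
      proof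
        assume "sop M (sub_plus s) i c d = 0"
        then have "Poly_Mapping.lookup (sp s (M i) c d) q = 0" by (simp add: sop_sp)
        with h2 show False by (simp add: lookup_sp)
      qed
      ultimately show "p \<in> {(i, c, d). Poly_Mapping.lookup (sp s T (a - c) (b - d)) i \<noteq> 0 \<and> sop M (sub_plus s) i c d \<noteq> 0}"
        unfolding p by simp
    qed
    ultimately show ?thesis by (rule finite_subset[rotated])
  qed
  have L2: "Sum_any (\<lambda>(i, c, d). X i c d) = Sum_any (\<lambda>i. Sum_any (\<lambda>(c, d). X i c d))"
    using SA_pair[OF finX] by (simp add: case_prod_beta)
  have L3: "Sum_any (\<lambda>(c, d). X i c d) = sub_plus s (Poly_Mapping.lookup T i * Poly_Mapping.lookup (M i) q) a b" for i
    unfolding X_def by (rule sub_plus_conv)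
  have finR: "finite {i. Poly_Mapping.lookup T i * Poly_Mapping.lookup (M i) q \<noteq> 0}"
    by (rule finite_subset[of _ "Poly_Mapping.keys T"]) (auto simp: in_keys_iff)
  have R: "Poly_Mapping.lookup (sp s (ext_lin M T) a b) q = Sum_any (\<lambda>i. sub_plus s (Poly_Mapping.lookup T i * Poly_Mapping.lookup (M i) q) a b)"
    unfolding lookup_sp el_lookup sub_plus_SA[OF finR] ..
  show "Poly_Mapping.lookup (app (sop M (sub_plus s)) (sp s T) a b) q = Poly_Mapping.lookup (sp s (ext_lin M T) a b) q"
    unfolding L1 L2 L3 R ..
qed


definition Fm :: "'b \<times> 'b \<Rightarrow> ('b \<times> 'b) fvec" where "Fm k = Poly_Mapping.single (sw k) 1"

lemma sop_Imat: "sop Imat (sub_plus s) = Id"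
  unfolding sop_sp Imat_def Id_def by (simp add: sp_single)

lemma flip_sp: "flip = sop Fm (sub_plus s)"
  unfolding sop_sp Fm_def flip_pop pop_def by (simp add: sp_single)

lemma Sx_sp: "sop S sub_x = sop S (sub_plus 0)"
  by (simp add: sub_x_plus0[abs_def])

lemma Sn_sp: "sop S sub_negx = sop (nm S) (sub_plus 0)"
  unfolding sop_def nm_def by (simp add: sub_negx_plus0 lookup_nv)

lemma comp_sop: "comp (sop M (sub_plus s)) (sop N (sub_plus s)) = sop (mcomp M N) (sub_plus s)"
  by (simp only: comp_def sop_sp[of N s]) (simp add: XL, simp add: sop_sp mcomp_def)

lemma nm_Fm: "nm Fm = Fm" unfolding nm_def Fm_def by (simp add: nv_single)

lemma mcomp_Fm_R: "mcomp S Fm = comp_flip S"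
  unfolding mcomp_def Fm_def comp_flip_def sw_def by (auto simp: el_single fun_eq_iff)

lemma UF:
  assumes un: "unitary S"
  shows "mcomp S (mcomp Fm (mcomp (nm S) Fm)) = Imat"
    and "mcomp (nm S) (mcomp Fm (mcomp S Fm)) = Imat"
proof -
  have "mcomp S (mcomp Fm (mcomp (nm S) Fm)) j = Imat j" for j
  proof -
    have e: "app (sop S sub_x) (app flip (app (sop S sub_negx) (app flip (const2 (bv j))))) = const2 (bv j)"
      using un unfolding unitary_def by blast
    have "app (sop S sub_x) (app flip (app (sop S sub_negx) (app flip (const2 (bv j))))) =
        sp 0 (mcomp S (mcomp Fm (mcomp (nm S) Fm)) j)"
      by (simp only: Sx_sp Sn_sp flip_sp[where s = 0] sp_single[where s = 0, symmetric] XL)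
         (simp add: mcomp_def el_single)
    then have "sp 0 (mcomp S (mcomp Fm (mcomp (nm S) Fm)) j) = sp 0 (Poly_Mapping.single j 1)"
      using e by (simp add: sp_single)
    then show ?thesis unfolding Imat_def by (rule sp_inj)
  qed
  then show 1: "mcomp S (mcomp Fm (mcomp (nm S) Fm)) = Imat" by auto
  have "nm (mcomp S (mcomp Fm (mcomp (nm S) Fm))) = nm Imat" using 1 by simp
  then show "mcomp (nm S) (mcomp Fm (mcomp S Fm)) = Imat" by (simp add: nm_mcomp nm_Fm)
qed

lemma UA:
  assumes un: "unitary S"
  shows "comp (sop S (sub_plus s)) (comp flip (comp (sop (nm S) (sub_plus s)) flip)) = Id"
  unfolding flip_sp[where s = s] comp_sop UF(1)[OF un] sop_Imat ..

lemma UB: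
  assumes un: "unitary S"
  shows "comp (sop (nm S) (sub_plus s)) (comp flip (comp (sop S (sub_plus s)) flip)) = Id"
  unfolding flip_sp[where s = s] comp_sop UF(2)[OF un] sop_Imat ..

lemma cond5:
  assumes un: "unitary S"
  shows "bij (ext_lin (comp_flip S))"
proof (rule o_bij[where g = "ext_lin (mcomp (nm S) Fm)"])
  show "ext_lin (mcomp (nm S) Fm) \<circ> ext_lin (comp_flip S) = id"
    unfolding mcomp_Fm_R[symmetric]
    by (auto simp: fun_eq_iff el_mcomp[symmetric] mcomp_assoc[symmetric] UF(2)[OF un])
  show "ext_lin (comp_flip S) \<circ> ext_lin (mcomp (nm S) Fm) = id"
    unfolding mcomp_Fm_R[symmetric]
    by (auto simp: fun_eq_iff el_mcomp[symmetric] mcomp_assoc[symmetric] UF(1)[OF un])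
qed


definition negop :: "('i \<Rightarrow> 'j ser2) \<Rightarrow> 'i \<Rightarrow> 'j ser2" where
  "negop E = (\<lambda>i. negvar (E i))"

lemma negvar_app: "negvar (app E F) = app (negop E) (negvar F)"
proof (intro ext)
  fix a b
  have "negvar (app E F) a b = Sum_any (\<lambda>(i, c, d). smul ((-1) ^ nat \<bar>a\<bar>)
      (smul (Poly_Mapping.lookup (F (a - c) (b - d)) i) (E i c d)))"
    unfolding negvar_def app_def smul_SA by (simp add: case_prod_beta)
  also have "\<dots> = app (negop E) (negvar F) a b"
    unfolding app_def negop_def negvar_def
  proof (rule Sum_any.cong, clarify)
    fix i c d
    have "((-1::complex) ^ nat \<bar>a\<bar>) = (-1) ^ nat \<bar>a - c\<bar> * (-1) ^ nat \<bar>c\<bar>"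
      using m1_add[of "a - c" c] by simp
    then show "smul ((-1) ^ nat \<bar>a\<bar>) (smul (Poly_Mapping.lookup (F (a - c) (b - d)) i) (E i c d)) =
      smul (Poly_Mapping.lookup (smul ((-1) ^ nat \<bar>a - c\<bar>) (F (a - c) (b - d))) i) (smul ((-1) ^ nat \<bar>c\<bar>) (E i c d))"
      by (simp add: smul_smul mult_ac)
  qed
  finally show "negvar (app E F) a b = app (negop E) (negvar F) a b" .
qed

lemma negop_comp: "negop (comp E E') = comp (negop E) (negop E')"
  unfolding comp_def by (simp add: negop_def[of "\<lambda>j. app E (E' j)"] negvar_app) (simp add: negop_def)

lemma neg_sub_plus: "(-1) ^ nat \<bar>c\<bar> * sub_plus s f c d = sub_plus (- s) (fneg f) c d"
proof (cases "0 \<le> d")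
  case True
  define m where "m = ((-1::complex) ^ nat d)"
  define u where "u = ((-1::complex) ^ nat \<bar>c\<bar>)"
  define B where "B = ((of_int (c + d) :: complex) gchoose nat d)"
  have h1: "((-1::complex) ^ nat \<bar>c + d\<bar>) = u * m"
    using m1_add[of c d] True unfolding u_def m_def by simp
  have h2: "(- s) ^ nat d = m * s ^ nat d" unfolding m_def by (rule power_minus)
  have h3: "m * m = 1" unfolding m_def by (simp add: power_add[symmetric])
  have "sub_plus (- s) (fneg f) c d = (m * s ^ nat d) * B * ((u * m) * fls_nth f (c + d))"
    using True unfolding sub_plus_def fneg_nth h1 h2 B_def by simp
  also have "\<dots> = (m * m) * (u * (s ^ nat d * B * fls_nth f (c + d)))" by (simp add: mult_ac)
  also have "\<dots> = u * sub_plus s f c d" using True unfolding h3 sub_plus_def B_def by simp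
  finally show ?thesis unfolding u_def by simp
qed (simp add: sub_plus_def)

lemma negvar_opf: "negop (opf g h) = opf (\<lambda>i p c d. (-1) ^ nat \<bar>c\<bar> * g i p c d) h"
  unfolding negop_def negvar_def opf_def by (simp add: fun_eq_iff smul_SA smul_smul)

lemma negop_sop: "negop (sop M (sub_plus s)) = sop (nm M) (sub_plus (- s))"
  unfolding sop_opf negvar_opf nm_def by (simp add: neg_sub_plus lookup_nv)

lemma negop_leg13: "negop (leg13 M (sub_plus s)) = leg13 (nm M) (sub_plus (- s))"
  unfolding leg13_opf negvar_opf nm_def
  by (intro arg_cong2[where f = opf] ext) (auto simp: neg_sub_plus lookup_nv split: prod.splits)

lemma negop_leg23: "negop (leg23 M (sub_plus s)) = leg23 (nm M) (sub_plus (- s))"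
  unfolding leg23_opf negvar_opf nm_def
  by (intro arg_cong2[where f = opf] ext) (auto simp: neg_sub_plus lookup_nv split: prod.splits)

lemma negop_Y12: "negop (Y12 Y) = Y12 Y"
  unfolding negop_def negvar_def Y12_def by (auto simp: fun_eq_iff)

lemma Hneg:
  assumes H: "comp (sop S (sub_plus 0)) (Y12 Y) = comp (Y12 Y) (comp (leg23 S (sub_plus 0)) (leg13 S (sub_plus 1)))"
  shows "comp (sop (nm S) (sub_plus 0)) (Y12 Y) = comp (Y12 Y) (comp (leg23 (nm S) (sub_plus 0)) (leg13 (nm S) (sub_plus (-1))))"
  using arg_cong[OF H, of negop] by (simp add: negop_comp negop_sop negop_leg13 negop_leg23 negop_Y12)


definition nice :: "('i \<Rightarrow> 'j ser2) \<Rightarrow> bool" where "nice E \<longleftrightarrow> gop E \<and> vop E \<and> dpos E"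

lemma nice_comp: "nice E \<Longrightarrow> nice E' \<Longrightarrow> nice (comp E E')"
  unfolding nice_def by (auto intro: gop_comp vop_comp dpos_comp)

lemma nice_gop: "nice E \<Longrightarrow> gop E" unfolding nice_def by simp

lemma assoc_nnG: "nice E \<Longrightarrow> nice E' \<Longrightarrow> gop E'' \<Longrightarrow> comp E (comp E' E'') = comp (comp E E') E''"
  unfolding nice_def by (rule comp_assoc) auto

lemma assoc_Gnn: "gop E \<Longrightarrow> nice E' \<Longrightarrow> nice E'' \<Longrightarrow> comp E (comp E' E'') = comp (comp E E') E''"
  unfolding nice_def by (rule comp_assoc) auto

lemma assoc_nGn: "nice E \<Longrightarrow> gop E' \<Longrightarrow> nice E'' \<Longrightarrow> comp E (comp E' E'') = comp (comp E E') E''"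
  unfolding nice_def by (rule comp_assoc) auto

lemma gop_comp_nG: "nice E \<Longrightarrow> gop E' \<Longrightarrow> gop (comp E E')"
  unfolding nice_def by (rule gop_comp) auto

lemma gop_comp_Gn: "gop E \<Longrightarrow> nice E' \<Longrightarrow> gop (comp E E')"
  unfolding nice_def by (rule gop_comp) auto

lemma nice_prims:
  "nice (sop M (sub_plus s))" "nice (leg12 M (sub_plus s))" "nice (leg13 M (sub_plus s))" "nice (leg23 M (sub_plus s))"
  "nice (pop p)" "nice flip" "nice Id"
  unfolding nice_def by (simp_all add: props)

lemma chain4:
  assumes "nice A" "nice B" "nice C" "nice D" "gop G"
  shows "comp A (comp B (comp C (comp D G))) = comp (comp A (comp B (comp C D))) G"
proof -
  have "comp C (comp D G) = comp (comp C D) G" using assms by (intro assoc_nnG)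
  moreover have "comp B (comp (comp C D) G) = comp (comp B (comp C D)) G" using assms by (intro assoc_nnG nice_comp)
  moreover have "comp A (comp (comp B (comp C D)) G) = comp (comp A (comp B (comp C D))) G"
    using assms by (intro assoc_nnG nice_comp)
  ultimately show ?thesis by simp
qed

definition liftmid :: "('a \<times> 'c \<Rightarrow> ('m \<times> 't) ser2) \<Rightarrow> 'a \<times> 'b \<times> 'c \<Rightarrow> ('m \<times> 'b \<times> 't) ser2" where
  "liftmid X = (\<lambda>(a, b, c) cc dd. pf (\<lambda>(m, t). (m, b, t)) (X (a, c) cc dd))"

definition lift1 :: "('b \<times> 'c \<Rightarrow> 'k ser2) \<Rightarrow> 'a \<times> 'b \<times> 'c \<Rightarrow> ('a \<times> 'k) ser2" where
  "lift1 X = (\<lambda>(a, b, c) cc dd. pf (\<lambda>k. (a, k)) (X (b, c) cc dd))"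

lemma inj_mid: "inj (\<lambda>(m, t). (m, b, t))" by (auto simp: inj_def)
lemma inj_left: "inj (\<lambda>k. (a, k))" by (auto simp: inj_def)

lemma leg13_lift: "leg13 M \<sigma> = liftmid (sop M \<sigma>)"
  unfolding leg13_opf sop_opf liftmid_def
  by (auto simp: fun_eq_iff opf_def pf_SA[OF inj_mid] pf_smul pf_bv case_prod_beta)

lemma leg23_lift: "leg23 M \<sigma> = lift1 (sop M \<sigma>)"
  unfolding leg23_opf sop_opf lift1_def
  by (auto simp: fun_eq_iff opf_def pf_SA[OF inj_left] pf_smul pf_bv case_prod_beta)

lemma liftmid_comp: "comp (liftmid X) (liftmid X') = liftmid (comp X X')"
proof
  fix i :: "'a \<times> 'b \<times> 'c"
  obtain a b c where i: "i = (a, b, c)" by (cases i)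
  have "comp (liftmid X) (liftmid X') (a, b, c) = app (liftmid X) (\<lambda>cc dd. pf (\<lambda>(m, t). (m, b, t)) (X' (a, c) cc dd))"
    unfolding comp_def liftmid_def by simp
  also have "\<dots> = app (\<lambda>k. liftmid X ((\<lambda>(m, t). (m, b, t)) k)) (X' (a, c))"
    by (rule app_pf_right[OF inj_mid])
  also have "(\<lambda>k. liftmid X ((\<lambda>(m, t). (m, b, t)) k)) = (\<lambda>k cc dd. pf (\<lambda>(m, t). (m, b, t)) (X k cc dd))"
    unfolding liftmid_def by (auto simp: fun_eq_iff)
  also have "app (\<lambda>k cc dd. pf (\<lambda>(m, t). (m, b, t)) (X k cc dd)) (X' (a, c)) =
      (\<lambda>cc dd. pf (\<lambda>(m, t). (m, b, t)) (app X (X' (a, c)) cc dd))"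
    by (rule app_pf_left[OF inj_mid])
  also have "\<dots> = liftmid (comp X X') (a, b, c)" unfolding liftmid_def comp_def by simp
  finally show "comp (liftmid X) (liftmid X') i = liftmid (comp X X') i" unfolding i .
qed

lemma lift1_comp: "comp (lift1 X) (lift1 X') = lift1 (comp X X')"
proof
  fix i :: "'a \<times> 'b \<times> 'c"
  obtain a b c where i: "i = (a, b, c)" by (cases i)
  have "comp (lift1 X) (lift1 X') (a, b, c) = app (lift1 X) (\<lambda>cc dd. pf (\<lambda>k. (a, k)) (X' (b, c) cc dd))"
    unfolding comp_def lift1_def by simp
  also have "\<dots> = app (\<lambda>k. lift1 X (a, k)) (X' (b, c))"
    by (rule app_pf_right[OF inj_left])
  also have "(\<lambda>k. lift1 X (a, k)) = (\<lambda>k cc dd. pf (\<lambda>k. (a, k)) (X k cc dd))"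
    unfolding lift1_def by (auto simp: fun_eq_iff)
  also have "app (\<lambda>k cc dd. pf (\<lambda>k. (a, k)) (X k cc dd)) (X' (b, c)) =
      (\<lambda>cc dd. pf (\<lambda>k. (a, k)) (app X (X' (b, c)) cc dd))"
    by (rule app_pf_left[OF inj_left])
  also have "\<dots> = lift1 (comp X X') (a, b, c)" unfolding lift1_def comp_def by simp
  finally show "comp (lift1 X) (lift1 X') i = lift1 (comp X X') i" unfolding i .
qed

lemma pf_const2: "(\<lambda>cc dd. pf h (const2 t cc dd)) = const2 (pf h t)"
  unfolding const2_def by (auto simp: fun_eq_iff)

lemma liftmid_Id: "liftmid Id = Id"
  unfolding liftmid_def Id_def by (auto simp: fun_eq_iff pf_const2 pf_bv)

lemma lift1_Id: "lift1 Id = Id"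
  unfolding lift1_def Id_def by (auto simp: fun_eq_iff pf_const2 pf_bv)

lemma liftmid_flip: "liftmid flip = pop (\<lambda>(a, b, c). (c, b, a))"
  unfolding liftmid_def flip_pop pop_def by (auto simp: fun_eq_iff pf_const2 pf_bv sw_def)

lemma lift1_flip: "lift1 flip = pop (\<lambda>(a, b, c). (a, c, b))"
  unfolding lift1_def flip_pop pop_def by (auto simp: fun_eq_iff pf_const2 pf_bv sw_def)

lemma C1:
  assumes un: "unitary S"
  shows "comp (comp (leg23 (nm S) (sub_plus 0)) (leg13 (nm S) (sub_plus (-1))))
     (comp (pop (\<lambda>(a, b, c). (c, b, a))) (comp (leg13 S (sub_plus (-1)))
       (comp (pop (\<lambda>(a, b, c). (c, b, a))) (comp (pop (\<lambda>(a, b, c). (a, c, b)))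
         (comp (leg23 S (sub_plus 0)) (pop (\<lambda>(a, b, c). (a, c, b)))))))) = Id"
  (is "comp (comp ?L23n ?L13n) (comp ?F13 (comp ?L13m (comp ?F13' ?G))) = Id")
proof -
  have U13: "comp ?L13n (comp ?F13 (comp ?L13m ?F13)) = Id"
    using arg_cong[OF UB[OF un, of "-1"], of liftmid]
    by (simp add: liftmid_comp[symmetric] leg13_lift[symmetric] liftmid_flip liftmid_Id)
  have U23: "comp ?L23n ?G = Id"
    using arg_cong[OF UB[OF un, of 0], of lift1]
    by (simp add: lift1_comp[symmetric] leg23_lift[symmetric] lift1_flip lift1_Id)
  have nG: "nice ?G" by (intro nice_comp nice_prims)
  have "comp ?L13n (comp ?F13 (comp ?L13m (comp ?F13 ?G))) = comp (comp ?L13n (comp ?F13 (comp ?L13m ?F13))) ?G"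
    by (rule chain4) (use nG in \<open>simp_all add: nice_prims nice_gop\<close>)
  then have A: "comp ?L13n (comp ?F13 (comp ?L13m (comp ?F13 ?G))) = ?G" using U13 by simp
  have "comp (comp ?L23n ?L13n) (comp ?F13 (comp ?L13m (comp ?F13 ?G))) =
        comp ?L23n (comp ?L13n (comp ?F13 (comp ?L13m (comp ?F13 ?G))))"
    by (rule assoc_nnG[symmetric]) (simp_all add: nice_prims nice_gop nice_comp nG)
  then show ?thesis using A U23 by simp
qed


lemma flip_flip: "comp flip flip = Id"
  unfolding flip_pop comp_pop_right by (auto simp: fun_eq_iff Id_def pop_def sw_def)

lemma comp_pop_pop: "inj p \<Longrightarrow> inj q \<Longrightarrow> comp (pop p) (comp (pop q) E) = comp (pop (\<lambda>x. p (q x))) E"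
  unfolding comp_def app_pop by (simp add: pf_pf fun_eq_iff)

lemma sub_x_fun: "sub_x = sub_plus 0" by (simp add: fun_eq_iff sub_x_plus0)

lemma D':
  fixes S :: "'a qop"
  shows "comp (pop (\<lambda>(a, b, c). (c, a, b)))
     (comp (pop (\<lambda>(a, b, c). (c, b, a))) (comp (leg13 S (sub_plus (-1)))
       (comp (pop (\<lambda>(a, b, c). (c, b, a))) (comp (pop (\<lambda>(a, b, c). (a, c, b)))
         (comp (leg23 S (sub_plus 0)) (pop (\<lambda>(a, b, c). (a, c, b))))))))
   = comp (comp (leg12 S (sub_plus (-1))) (pop (\<lambda>(a, b, c). (b, a, c))))
       (comp (leg23 S (sub_plus 0)) (pop (\<lambda>(a, b, c). (a, c, b))))"
proof -
  let ?Q = "pop (\<lambda>(a::'a, b::'a, c::'a). (c, a, b))" and ?F = "pop (\<lambda>(a::'a, b::'a, c::'a). (c, b, a))"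
    and ?L13 = "leg13 S (sub_plus (-1))" and ?P = "pop (\<lambda>(a::'a, b::'a, c::'a). (a, c, b))"
    and ?G0 = "comp (leg23 S (sub_plus 0)) (pop (\<lambda>(a::'a, b::'a, c::'a). (a, c, b)))"
    and ?L12 = "leg12 S (sub_plus (-1))" and ?P12 = "pop (\<lambda>(a::'a, b::'a, c::'a). (b, a, c))"
  let ?r = "\<lambda>x. (\<lambda>(a, b, c). (c, b, a)) ((\<lambda>(a, b, c). (a, c, b)) x)"
  have injs: "inj (\<lambda>(a::'a, b::'a, c::'a). (c, b, a))" "inj (\<lambda>(a::'a, b::'a, c::'a). (a, c, b))"
    "inj (\<lambda>(a::'a, b::'a, c::'a). (c, a, b))" by (auto simp: inj_def)
  have nG0: "nice ?G0" by (intro nice_comp nice_prims)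
  have e1: "comp ?F (comp ?P ?G0) = comp (pop ?r) ?G0" by (rule comp_pop_pop[OF injs(1,2)])
  have e2: "comp ?L13 (comp (pop ?r) ?G0) = comp (comp ?L13 (pop ?r)) ?G0"
    by (rule assoc_nnG) (simp_all add: nice_prims nice_gop nG0)
  have e3: "comp ?F (comp (comp ?L13 (pop ?r)) ?G0) = comp (comp ?F (comp ?L13 (pop ?r))) ?G0"
    by (rule assoc_nnG) (simp_all add: nice_prims nice_gop nG0 nice_comp)
  have e4: "comp ?Q (comp (comp ?F (comp ?L13 (pop ?r))) ?G0) = comp (comp ?Q (comp ?F (comp ?L13 (pop ?r)))) ?G0"
    by (rule assoc_nnG) (simp_all add: nice_prims nice_gop nG0 nice_comp)
  have e5: "comp ?Q (comp ?F (comp ?L13 (pop ?r))) = comp ?L12 ?P12"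
    unfolding comp_pop_right
    by (simp add: comp_def app_pop leg12_opf leg13_opf pf_opf inj_def fun_eq_iff split: prod.splits)
       (simp add: opf_def case_prod_beta)
  show ?thesis unfolding e1 e2 e3 e4 e5 ..
qed

lemma Hop:
  assumes H: "\<forall>t. app (sop S sub_x) (app (Y12 Y) (const2 t)) =
       app (Y12 Y) (app (leg23 S sub_x) (app (leg13 S (sub_plus 1)) (const2 t)))"
  shows "comp (sop S (sub_plus 0)) (Y12 Y) = comp (Y12 Y) (comp (leg23 S (sub_plus 0)) (leg13 S (sub_plus 1)))"
proof
  fix j
  show "comp (sop S (sub_plus 0)) (Y12 Y) j = comp (Y12 Y) (comp (leg23 S (sub_plus 0)) (leg13 S (sub_plus 1))) j"
    using H[rule_format, of "bv j"] unfolding comp_def sub_x_fun by simp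
qed

lemma cond4:
  assumes tr: "trunc Y" and un: "unitary S"
    and H: "\<forall>t. app (sop S sub_x) (app (Y12 Y) (const2 t)) =
       app (Y12 Y) (app (leg23 S sub_x) (app (leg13 S (sub_plus 1)) (const2 t)))"
  shows "app (sop (comp_flip S) sub_x) (app (Y12 Y) (const2 t)) =
     app (Y23 Y) (app (leg12 (comp_flip S) (sub_plus (-1))) (app (leg23 (comp_flip S) sub_x) (const2 t)))"
proof -
  let ?A0 = "sop S (sub_plus 0)" and ?B0 = "sop (nm S) (sub_plus 0)"
  let ?N = "comp (leg23 (nm S) (sub_plus 0)) (leg13 (nm S) (sub_plus (-1)))"
  let ?K = "comp (pop (\<lambda>(a, b, c). (c, b, a))) (comp (leg13 S (sub_plus (-1)))
       (comp (pop (\<lambda>(a, b, c). (c, b, a))) (comp (pop (\<lambda>(a, b, c). (a, c, b)))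
         (comp (leg23 S (sub_plus 0)) (pop (\<lambda>(a, b, c). (a, c, b)))))))"
  let ?c = "const2 t"
  have gY12: "gop (Y12 Y)" and gY23: "gop (Y23 Y)" using tr by (rule gop_Y12, rule gop_Y23)
  have nN: "nice ?N" and nK: "nice ?K" by (intro nice_comp nice_prims)+
  have nA0: "nice ?A0" and nB0: "nice ?B0" by (rule nice_prims)+
  have nfl: "nice flip" by (rule nice_prims)
  have Hn: "comp ?B0 (Y12 Y) = comp (Y12 Y) ?N" by (rule Hneg[OF Hop[OF H]])
  have C: "comp ?N ?K = Id" using C1[OF un] .
  have E1: "Y12 Y = comp ?B0 (comp (Y12 Y) ?K)"
  proof -
    have "Y12 Y = comp (Y12 Y) (comp ?N ?K)" using C by simp
    also have "\<dots> = comp (comp (Y12 Y) ?N) ?K" by (rule assoc_Gnn[OF gY12 nN nK])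
    also have "\<dots> = comp (comp ?B0 (Y12 Y)) ?K" using Hn by simp
    also have "\<dots> = comp ?B0 (comp (Y12 Y) ?K)" by (rule assoc_nGn[OF nB0 gY12 nK, symmetric])
    finally show ?thesis .
  qed
  have gW: "gop (comp (Y12 Y) ?K)" by (rule gop_comp_Gn[OF gY12 nK])
  have AF: "comp ?A0 (comp flip ?B0) = flip"
  proof -
    have "comp ?A0 (comp flip (comp ?B0 (comp flip flip))) = comp (comp ?A0 (comp flip (comp ?B0 flip))) flip"
      by (rule chain4) (simp_all add: nice_prims nice_gop)
    then show ?thesis using UA[OF un, of 0] by (simp add: flip_flip)
  qed
  have X: "comp ?A0 (comp flip (Y12 Y)) = comp (Y23 Y) (comp (pop (\<lambda>(a, b, c). (c, a, b))) ?K)"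
  proof -
    have "comp ?A0 (comp flip (Y12 Y)) = comp ?A0 (comp flip (comp ?B0 (comp (Y12 Y) ?K)))"
      using E1 by simp
    also have "comp flip (comp ?B0 (comp (Y12 Y) ?K)) = comp (comp flip ?B0) (comp (Y12 Y) ?K)"
      by (rule assoc_nnG[OF nfl nB0 gW])
    also have "comp ?A0 (comp (comp flip ?B0) (comp (Y12 Y) ?K)) = comp (comp ?A0 (comp flip ?B0)) (comp (Y12 Y) ?K)"
      by (rule assoc_nnG[OF nA0 nice_comp[OF nfl nB0] gW])
    also have "\<dots> = comp flip (comp (Y12 Y) ?K)" unfolding AF ..
    also have "\<dots> = comp (comp flip (Y12 Y)) ?K" by (rule assoc_nGn[OF nfl gY12 nK])
    also have "\<dots> = comp (comp (Y23 Y) (pop (\<lambda>(a, b, c). (c, a, b)))) ?K" unfolding comp_flip_Y12 ..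
    also have "\<dots> = comp (Y23 Y) (comp (pop (\<lambda>(a, b, c). (c, a, b))) ?K)"
      by (rule assoc_Gnn[OF gY23 nice_prims(5) nK, symmetric])
    finally show ?thesis .
  qed
  have L: "app (sop (comp_flip S) sub_x) (app (Y12 Y) ?c) = app (comp (Y23 Y) (comp (pop (\<lambda>(a, b, c). (c, a, b))) ?K)) ?c"
  proof -
    have "app (sop (comp_flip S) sub_x) (app (Y12 Y) ?c) = app (comp ?A0 flip) (app (Y12 Y) ?c)"
      unfolding sop_R sub_x_fun ..
    also have "\<dots> = app (comp (comp ?A0 flip) (Y12 Y)) ?c"
      by (rule assoc_good) (use gY12 nA0 nfl in \<open>auto simp: good_const2 vfin_const2 nice_def intro: gop_comp dpos_comp\<close>)
    also have "comp (comp ?A0 flip) (Y12 Y) = comp ?A0 (comp flip (Y12 Y))"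
      by (rule assoc_nnG[OF nA0 nfl gY12, symmetric])
    finally show ?thesis unfolding X .
  qed
  have R: "app (Y23 Y) (app (leg12 (comp_flip S) (sub_plus (-1))) (app (leg23 (comp_flip S) sub_x) ?c)) =
      app (comp (Y23 Y) (comp (comp (leg12 S (sub_plus (-1))) (pop (\<lambda>(a, b, c). (b, a, c))))
        (comp (leg23 S (sub_plus 0)) (pop (\<lambda>(a, b, c). (a, c, b)))))) ?c"
  proof -
    let ?O1 = "comp (leg12 S (sub_plus (-1))) (pop (\<lambda>(a, b, c). (b, a, c)))"
    let ?O2 = "comp (leg23 S (sub_plus 0)) (pop (\<lambda>(a, b, c). (a, c, b)))"
    have n1: "nice ?O1" and n2: "nice ?O2" by (intro nice_comp nice_prims)+
    have "app (Y23 Y) (app (leg12 (comp_flip S) (sub_plus (-1))) (app (leg23 (comp_flip S) sub_x) ?c)) =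
        app (Y23 Y) (app ?O1 (app ?O2 ?c))"
      unfolding leg12_R leg23_R sub_x_fun ..
    also have "app ?O1 (app ?O2 ?c) = app (comp ?O1 ?O2) ?c"
      by (rule assoc_good) (use n1 n2 in \<open>auto simp: good_const2 vfin_const2 nice_def\<close>)
    also have "app (Y23 Y) (app (comp ?O1 ?O2) ?c) = app (comp (Y23 Y) (comp ?O1 ?O2)) ?c"
      by (rule assoc_good) (use gY23 nice_comp[OF n1 n2] in \<open>auto simp: good_const2 vfin_const2 nice_def\<close>)
    finally show ?thesis .
  qed
  show ?thesis unfolding L R D' ..
qed


theorem lemma3p7:
  fixes Y :: "'b vop" and vac :: "'b vec" and S :: "'b qop"
  assumes "qva Y vac S"
  shows "invertible_twisting Y vac Y vac (comp_flip S)"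
proof -
  have w: "weak_qva Y vac" and un: "unitary S"
    and vacS: "\<forall>v. app (sop S sub_x) (const2 (tens vac v)) = const2 (tens vac v)"
    and H: "\<forall>t. app (sop S sub_x) (app (Y12 Y) (const2 t)) =
       app (Y12 Y) (app (leg23 S sub_x) (app (leg13 S (sub_plus 1)) (const2 t)))"
    using assms unfolding qva_def by blast+
  have tr: "trunc Y" using w unfolding weak_qva_def by (blast intro: nonlocal_trunc)
  show ?thesis
    unfolding invertible_twisting_def twisting_op_def
    using cond1[OF vacS] cond2[OF vacS un] cond3[OF tr H] cond4[OF tr un H] cond5[OF un]
    by blast
qed

end
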